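(* There is an absolute constant $C_0$ such that the following holds. Let $a,b$ be positive integers and $\delta,\nu\in\mathbb{N}^{-1}$ with $\nu^a\delta^{-1},\nu^b\delta^{-1}\in\mathbb{N}$, and let $E>10^3$. Then $$\mathcal{M}_{1,a,b}(\delta,\nu,E)\le C_E\,\mathcal{M}_{2,b,a}(\delta,\nu,E/C_0)^{1/4}\,D(\delta/\nu^b)^{3/4},$$ where $C_E$ depends only on $E$.
   Context: Write $e(z)=e^{2\pi i z}$, $\gamma(\xi)=(\xi,\xi^2,\xi^3)$, and for an interval $J\subset[0,1]$ and $g:[0,1]\to\mathbb{C}$, $(\mathcal{E}_J g)(x)=\int_J g(\xi)e(x\cdot\gamma(\xi))d\xi$, $x\in\mathbb{R}^3$. For an interval $I$ and $\sigma>0$ with $|I|/\sigma\in\mathbb{N}$, $P_\sigma(I)$ is the partition of $I$ into intervals of length $\sigma$. For $\delta\in\mathbb{N}^{-1}$, $D(\delta)$ is the smallest constant with $\|\mathcal{E}_{[0,1]}g\|_{L^{12}(\mathbb{R}^3)}\le D(\delta)(\sum_{J\in P_\delta([0,1])}\|\mathcal{E}_Jg\|_{L^{12}(\mathbb{R}^3)}^4)^{1/4}$ for all $g$. For an interval $I\subset[0,1]$ with center $c_I$, let $\mathcal{T}_I=\{x\in\mathbb{R}^3:|x\cdot\gamma'(c_I)|\le|I|^{-1},|x\cdot\gamma''(c_I)|\le|I|^{-2},|x\cdot\gamma'''(c_I)|\le|I|^{-3}\}$. For a parallelepiped $T=A[0,1]^3+c$ ($A$ invertible) and $E>0$, $w_{T,E}(x)=(1+|A^{-1}(x-c)|)^{-E}$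 and $\phi_{T,E}(x)=|\det A|^{-1}w_{T,E}(x)$. For $\delta,\nu\in\mathbb{N}^{-1}$, $a,b\in\mathbb{N}$, $E>0$: $\mathcal{M}_{1,a,b}(\delta,\nu,E)$ is the smallest $M$ such that $$\int_{\mathbb{R}^3}\big(|\mathcal{E}_Ig|^2*\phi_{\mathcal{T}_I,E}\big)\big(|\mathcal{E}_{I'}g|^{10}*\phi_{\mathcal{T}_{I'},E}\big)\le M^{12}\Big(\sum_{J\in P_\delta(I)}\|\mathcal{E}_Jg\|_{L^{12}}^4\Big)^{1/2}\Big(\sum_{J'\in P_\delta(I')}\|\mathcal{E}_{J'}g\|_{L^{12}}^4\Big)^{5/2},$$ and $\mathcal{M}_{2,a,b}(\delta,\nu,E)$ is the smallest $M$ such that $$\int_{\mathbb{R}^3}\big(|\mathcal{E}_Ig|^4*\phi_{\mathcal{T}_I,E}\big)\big(|\mathcal{E}_{I'}g|^{8}*\phi_{\mathcal{T}_{I'},E}\big)\le M^{12}\Big(\sum_{J\in P_\delta(I)}\|\mathcal{E}_Jg\|_{L^{12}}^4\Big)\Big(\sum_{J'\in P_\delta(I')}\|\mathcal{E}_{J'}g\|_{L^{12}}^4\Big)^{2},$$ each for all $g:[0,1]\to\mathbb{C}$ and all $I\in P_{\nu^a}([0,1])$, $I'\in P_{\nu^b}([0,1])$ with $\mathrm{dist}(I,I')\ge\nu$ (all $L^{12}$ norms over $\mathbb{R}^3$). *)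

theory Defs
  imports "HOL-Analysis.Analysis"
begin

text \<open>Real power on [0,\<infinity>]: x^p for p > 0, with \<infinity>^p = \<infinity>.\<close>
definition enn_powr :: "real \<Rightarrow> ennreal \<Rightarrow> ennreal" where
  "enn_powr p x = (if x = \<infinity> then \<infinity> else ennreal (enn2real x powr p))"

text \<open>e(z) = exp(2 pi i z)\<close>
definition e :: "real \<Rightarrow> complex" where
  "e z = exp (2 * pi * \<i> * complex_of_real z)"

text \<open>moment curve gamma(xi) = (xi, xi^2, xi^3)\<close>
definition gam :: "real \<Rightarrow> real^3" where
  "gam \<xi> = vector [\<xi>, \<xi>^2, \<xi>^3]"

text \<open>Extension operator (E_J g)(x) = int_J g(xi) e(x . gamma(xi)) dxi\<close>
definition ext :: "real set \<Rightarrow> (real \<Rightarrow> complex) \<Rightarrow> real^3 \<Rightarrow> complex" where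
  "ext J g x = (LINT \<xi>:J|lborel. g \<xi> * e (x \<bullet> gam \<xi>))"

text \<open>L^12 norm over R^3 (possibly infinite)\<close>
definition L12 :: "(real^3 \<Rightarrow> complex) \<Rightarrow> ennreal" where
  "L12 f = enn_powr (1/12) (\<integral>\<^sup>+ x. ennreal (cmod (f x) ^ 12) \<partial>lborel)"

text \<open>P_sigma([l,r]): partition of [l,r] into intervals of length sigma
  (used only when (r-l)/sigma is a natural number)\<close>
definition part :: "real \<Rightarrow> real \<Rightarrow> real \<Rightarrow> real set set" where
  "part \<sigma> l r = {{l + real k * \<sigma> .. l + (real k + 1) * \<sigma>} | k. k < nat \<lfloor>(r - l) / \<sigma>\<rfloor>}"

text \<open>N^{-1} = {1/n : n a positive integer}\<close>
definition Ninv :: "real set" where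
  "Ninv = {1 / real n | n. n \<ge> 1}"

text \<open>Weights: for T = A[0,1]^3 + c, w_{T,E}(x) = (1+|A^{-1}(x-c)|)^{-E}, phi = |det A|^{-1} w\<close>
definition wT :: "real^3^3 \<Rightarrow> real^3 \<Rightarrow> real \<Rightarrow> real^3 \<Rightarrow> real" where
  "wT A c E x = (1 + norm (matrix_inv A *v (x - c))) powr (- E)"

definition phiT :: "real^3^3 \<Rightarrow> real^3 \<Rightarrow> real \<Rightarrow> real^3 \<Rightarrow> real" where
  "phiT A c E x = wT A c E x / \<bar>det A\<bar>"

text \<open>For an interval I with centre c and length L, T_I = {x. |M_I x|_inf <= 1} where the rows
  of M_I are L gamma'(c), L^2 gamma''(c), L^3 gamma'''(c).  Hence
  T_I = A_I [0,1]^3 + c_I with A_I = 2 M_I^{-1} and c_I = - M_I^{-1} (1,1,1).\<close>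
definition MT :: "real set \<Rightarrow> real^3^3" where
  "MT I = (let c = (Inf I + Sup I) / 2; L = Sup I - Inf I in
     vector [vector [L, L * 2 * c, L * 3 * c^2],
             vector [0, L^2 * 2, L^2 * 6 * c],
             vector [0, 0, L^3 * 6]])"

definition TA :: "real set \<Rightarrow> real^3^3" where
  "TA I = (2::real) *\<^sub>R matrix_inv (MT I)"

definition Tc :: "real set \<Rightarrow> real^3" where
  "Tc I = - (matrix_inv (MT I) *v vector [1, 1, 1])"

text \<open>(|f|^p * phi_{T_I,E})(x)\<close>
definition convI :: "(real^3 \<Rightarrow> complex) \<Rightarrow> nat \<Rightarrow> real set \<Rightarrow> real \<Rightarrow> real^3 \<Rightarrow> ennreal" where
  "convI f p I E x = (\<integral>\<^sup>+ y. ennreal (cmod (f (x - y)) ^ p * phiT (TA I) (Tc I) E y) \<partial>lborel)"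

text \<open>Admissible g: integrable on [0,1]\<close>
definition g_ok :: "(real \<Rightarrow> complex) \<Rightarrow> bool" where
  "g_ok g = set_integrable lborel {0..1} g"

definition Dec :: "real \<Rightarrow> ennreal" where
  "Dec \<delta> = Inf {D. \<forall>g. g_ok g \<longrightarrow>
      L12 (ext {0..1} g) \<le> D * enn_powr (1/4) (\<Sum>J\<in>part \<delta> 0 1. L12 (ext J g) ^ 4)}"

definition M1 :: "nat \<Rightarrow> nat \<Rightarrow> real \<Rightarrow> real \<Rightarrow> real \<Rightarrow> ennreal" where
  "M1 a b \<delta> \<nu> E = Inf {M. \<forall>g. g_ok g \<longrightarrow>
      (\<forall>I\<in>part (\<nu>^a) 0 1. \<forall>I'\<in>part (\<nu>^b) 0 1. setdist I I' \<ge> \<nu> \<longrightarrow>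
        (\<integral>\<^sup>+ x. convI (ext I g) 2 I E x * convI (ext I' g) 10 I' E x \<partial>lborel)
        \<le> M ^ 12 * enn_powr (1/2) (\<Sum>J\<in>part \<delta> (Inf I) (Sup I). L12 (ext J g) ^ 4)
                 * enn_powr (5/2) (\<Sum>J'\<in>part \<delta> (Inf I') (Sup I'). L12 (ext J' g) ^ 4))}"

definition M2 :: "nat \<Rightarrow> nat \<Rightarrow> real \<Rightarrow> real \<Rightarrow> real \<Rightarrow> ennreal" where
  "M2 a b \<delta> \<nu> E = Inf {M. \<forall>g. g_ok g \<longrightarrow>
      (\<forall>I\<in>part (\<nu>^a) 0 1. \<forall>I'\<in>part (\<nu>^b) 0 1. setdist I I' \<ge> \<nu> \<longrightarrow>
        (\<integral>\<^sup>+ x. convI (ext I g) 4 I E x * convI (ext I' g) 8 I' E x \<partial>lborel)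
        \<le> M ^ 12 * (\<Sum>J\<in>part \<delta> (Inf I) (Sup I). L12 (ext J g) ^ 4)
                 * (\<Sum>J'\<in>part \<delta> (Inf I') (Sup I'). L12 (ext J' g) ^ 4) ^ 2)}"

end

theory Submission
  imports Defs
begin

lemma ep_top[simp]: "enn_powr p top = top"
  by (simp add: enn_powr_def)

lemma ep_ennreal[simp]: "0 \<le> r \<Longrightarrow> enn_powr p (ennreal r) = ennreal (r powr p)"
  by (simp add: enn_powr_def)

lemma ep_zero[simp]: "enn_powr p 0 = 0"
  by (simp add: enn_powr_def)

lemma ep_one[simp]: "enn_powr 1 x = x"
  by (cases x rule: ennreal_cases) auto

lemma ep_mult: assumes "p > 0" shows "enn_powr p (x * y) = enn_powr p x * enn_powr p y"
proof (cases x rule: ennreal_cases)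
  case (real r) note xr = this
  show ?thesis
  proof (cases y rule: ennreal_cases)
    case (real s)
    then show ?thesis using xr by (simp add: ennreal_mult'[symmetric] powr_mult)
  next
    case top
    then show ?thesis using xr assms
      by (cases "r = 0") (auto simp: ennreal_mult_top ennreal_top_mult)
  qed
next
  case top note xt = this
  show ?thesis
  proof (cases y rule: ennreal_cases)
    case (real s)
    then show ?thesis using xt assms
      by (cases "s = 0") (auto simp: ennreal_mult_top ennreal_top_mult)
  next
    case top
    then show ?thesis using xt by simp
  qed
qed

lemma ep_add: assumes "p > 0" "q > 0" shows "enn_powr p x * enn_powr q x = enn_powr (p + q) x"
  using assms by (cases x rule: ennreal_cases) (auto simp: ennreal_mult'[symmetric] powr_add)

lemma ep_ep: assumes "p > 0" "q > 0" shows "enn_powr p (enn_powr q x) = enn_powr (p * q) x"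
  using assms by (cases x rule: ennreal_cases) (auto simp: powr_powr mult.commute)

lemma ep_pow: assumes "p > 0" "n > 0" shows "enn_powr p x ^ n = enn_powr (p * real n) x"
proof (cases x rule: ennreal_cases)
  case (real r) then show ?thesis using assms by (cases "r = 0") (auto simp: ennreal_power powr_power mult.commute)
qed (use assms in simp)

lemma ep_nat: assumes "n > 0" shows "enn_powr (real n) x = x ^ n"
  using ep_pow[of 1 n x] assms by simp

lemma ep_mono: assumes "x \<le> y" "p \<ge> 0" shows "enn_powr p x \<le> enn_powr p y"
proof (cases y rule: ennreal_cases)
  case (real s)
  then have "x \<noteq> top" using assms by (auto simp: top_unique)
  then obtain r where r: "x = ennreal r" "0 \<le> r" by (cases x rule: ennreal_cases) auto
  then have "r \<le> s" using assms real by simp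
  then show ?thesis using r real assms by (auto intro!: ennreal_leI powr_mono2)
qed simp

lemma ep_eq_0_iff[simp]: "p > 0 \<Longrightarrow> enn_powr p x = 0 \<longleftrightarrow> x = 0"
  by (cases x rule: ennreal_cases) auto

lemma ep_eq_top_iff[simp]: "enn_powr p x = top \<longleftrightarrow> x = top"
  by (cases x rule: ennreal_cases) auto

lemma ep_measurable[measurable]:
  assumes [measurable]: "f \<in> borel_measurable M"
  shows "(\<lambda>x. enn_powr p (f x)) \<in> borel_measurable M"
proof -
  have "(\<lambda>x::ennreal. if x = top then top else ennreal (enn2real x powr p)) \<in> borel_measurable borel"
    by measurable
  then show ?thesis unfolding enn_powr_def infinity_ennreal_def by (rule measurable_compose[OF assms])
qed

lemma young14:
  fixes s t a b :: real
  assumes "0 \<le> s" "0 \<le> t" "0 < a" "0 < b"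
  shows "s powr (1/4) * t powr (3/4) \<le> (a powr (1/4) * b powr (3/4)) * (s/(4*a) + 3*t/(4*b))"
proof -
  define \<alpha> where "\<alpha> = (s/a) powr (1/4)"
  define \<beta> where "\<beta> = (t/b) powr (3/4)"
  have "\<alpha> * \<beta> \<le> \<alpha> powr 4 / 4 + \<beta> powr (4/3) / (4/3)"
    by (rule Youngs_inequality) (auto simp: \<alpha>_def \<beta>_def)
  also have "\<alpha> powr 4 = s / a" using assms by (simp add: \<alpha>_def powr_powr)
  also have "\<beta> powr (4/3) = t / b" using assms by (simp add: \<beta>_def powr_powr)
  finally have *: "\<alpha> * \<beta> \<le> s/(4*a) + 3*t/(4*b)" by simp
  have "s powr (1/4) * t powr (3/4) = (a powr (1/4) * b powr (3/4)) * (\<alpha> * \<beta>)"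
    using assms by (simp add: \<alpha>_def \<beta>_def powr_divide)
  also have "\<dots> \<le> (a powr (1/4) * b powr (3/4)) * (s/(4*a) + 3*t/(4*b))"
    by (rule mult_left_mono[OF *]) simp
  finally show ?thesis .
qed

lemma young14_enn:
  fixes u v :: ennreal and a b :: real
  assumes "0 < a" "0 < b"
  shows "enn_powr (1/4) u * enn_powr (3/4) v \<le>
     ennreal ((a powr (1/4) * b powr (3/4)) / (4*a)) * u + ennreal (3 * (a powr (1/4) * b powr (3/4)) / (4*b)) * v"
proof (cases u rule: ennreal_cases)
  case (real s) note us = this
  show ?thesis
  proof (cases v rule: ennreal_cases)
    case (real t)
    have "s powr (1/4) * t powr (3/4) \<le> ((a powr (1/4) * b powr (3/4)) / (4*a)) * s + (3 * (a powr (1/4) * b powr (3/4)) / (4*b)) * t"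
      using young14[of s t a b] us real assms by (simp add: field_simps)
    then show ?thesis using us real assms
      by (simp add: ennreal_mult'[symmetric] ennreal_plus[symmetric] del: ennreal_plus)
  next
    case top
    then show ?thesis using us assms
      by (cases "s = 0") (auto simp: ennreal_mult_top ennreal_top_mult)
  qed
next
  case top
  then show ?thesis using assms
    by (cases "v = 0") (auto simp: ennreal_mult_top ennreal_top_mult)
qed

lemma holder14:
  fixes f h :: "'a \<Rightarrow> ennreal"
  assumes [measurable]: "f \<in> borel_measurable M" "h \<in> borel_measurable M"
  shows "(\<integral>\<^sup>+x. enn_powr (1/4) (f x) * enn_powr (3/4) (h x) \<partial>M)
     \<le> enn_powr (1/4) (\<integral>\<^sup>+x. f x \<partial>M) * enn_powr (3/4) (\<integral>\<^sup>+x. h x \<partial>M)"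
proof -
  define F where "F = (\<integral>\<^sup>+x. f x \<partial>M)"
  define H where "H = (\<integral>\<^sup>+x. h x \<partial>M)"
  show ?thesis
  proof (cases "F = 0 \<or> H = 0")
    case True
    then have "AE x in M. enn_powr (1/4) (f x) * enn_powr (3/4) (h x) = 0"
    proof
      assume "F = 0"
      then have "AE x in M. f x = 0" unfolding F_def by (simp add: nn_integral_0_iff_AE)
      then show ?thesis by eventually_elim simp
    next
      assume "H = 0"
      then have "AE x in M. h x = 0" unfolding H_def by (simp add: nn_integral_0_iff_AE)
      then show ?thesis by eventually_elim simp
    qed
    then have "(\<integral>\<^sup>+x. enn_powr (1/4) (f x) * enn_powr (3/4) (h x) \<partial>M) = 0"
      by (simp add: nn_integral_0_iff_AE)
    then show ?thesis by simp
  next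
    case False
    then have F0: "F \<noteq> 0" and H0: "H \<noteq> 0" by auto
    show ?thesis
    proof (cases "F = top \<or> H = top")
      case True
      then have "enn_powr (1/4) F * enn_powr (3/4) H = top"
        using F0 H0 by (auto simp: ennreal_mult_top ennreal_top_mult)
      then show ?thesis by (simp add: F_def H_def)
    next
      case False
      then obtain a b where a: "F = ennreal a" "a > 0" and b: "H = ennreal b" "b > 0"
        using F0 H0 by (cases F rule: ennreal_cases; cases H rule: ennreal_cases) auto
      define c where "c = a powr (1/4) * b powr (3/4)"
      have "(\<integral>\<^sup>+x. enn_powr (1/4) (f x) * enn_powr (3/4) (h x) \<partial>M)
          \<le> (\<integral>\<^sup>+x. ennreal (c / (4*a)) * f x + ennreal (3 * c / (4*b)) * h x \<partial>M)"
        by (rule nn_integral_mono) (use young14_enn[OF a(2) b(2)] in \<open>simp add: c_def\<close>)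
      also have "\<dots> = ennreal (c / (4*a)) * F + ennreal (3 * c / (4*b)) * H"
        by (simp add: nn_integral_add nn_integral_cmult F_def H_def)
      also have "\<dots> = ennreal c"
        using a b by (simp add: ennreal_mult'[symmetric] ennreal_plus[symmetric] c_def field_simps del: ennreal_plus)
      also have "\<dots> = enn_powr (1/4) F * enn_powr (3/4) H"
        using a b by (simp add: c_def ennreal_mult'[symmetric])
      finally show ?thesis by (simp add: F_def H_def)
    qed
  qed
qed

lemma Inf_pow_bound:
  fixes S :: "ennreal set" and X Y :: ennreal
  assumes n: "n > 0" and Y: "0 < Y" "Y < top" and all: "\<And>M. M \<in> S \<Longrightarrow> X \<le> M ^ n * Y"
  shows "X \<le> (Inf S) ^ n * Y"
proof -
  define Z where "Z = X / Y"
  have XZ: "X = Z * Y" using Y unfolding Z_def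
    by (simp add: ennreal_divide_times ennreal_times_divide less_top) 
  have "enn_powr (1 / real n) Z \<le> Inf S"
  proof (rule Inf_greatest)
    fix M assume "M \<in> S"
    then have "Z \<le> M ^ n" using all[of M] Y unfolding Z_def
      by (intro divide_le_posI_ennreal) (auto simp: mult.commute)
    then have "enn_powr (1 / real n) Z \<le> enn_powr (1 / real n) (M ^ n)" by (rule ep_mono) simp
    also have "enn_powr (1 / real n) (M ^ n) = M"
      using n by (simp add: ep_nat[symmetric] ep_ep)
    finally show "enn_powr (1 / real n) Z \<le> M" .
  qed
  then have "enn_powr (1 / real n) Z ^ n \<le> (Inf S) ^ n" by (rule power_mono) simp
  also have "enn_powr (1 / real n) Z ^ n = Z" using n by (simp add: ep_pow)
  finally show ?thesis using XZ by (simp add: mult_right_mono)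
qed

lemma bl_mv: "bounded_linear ((*v) (B::real^3^3))"
  using matrix_vector_mul_linear linear_conv_bounded_linear by auto

lemma mv_meas[measurable]: "(*v) (B::real^3^3) \<in> borel_measurable borel"
  by (intro borel_measurable_continuous_onI linear_continuous_on bl_mv)

lemma matrix_inv_props:
  fixes A :: "'a::semiring_1^'n^'n" assumes "invertible A"
  shows "A ** matrix_inv A = mat 1" "matrix_inv A ** A = mat 1"
proof -
  have "\<exists>A'. A ** A' = mat 1 \<and> A' ** A = mat 1" using assms unfolding invertible_def by blast
  then have "A ** matrix_inv A = mat 1 \<and> matrix_inv A ** A = mat 1"
    unfolding matrix_inv_def by (rule someI_ex)
  then show "A ** matrix_inv A = mat 1" "matrix_inv A ** A = mat 1" by auto
qed

lemma lborel_linear: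
  fixes B :: "real^3^3" assumes B: "invertible B"
  shows "lborel = density (distr lborel borel ((*v) B)) (\<lambda>_. ennreal \<bar>det B\<bar>)"
proof (rule lborel_eqI)
  fix l u :: "real^3" assume le: "\<And>b. b \<in> Basis \<Longrightarrow> l \<bullet> b \<le> u \<bullet> b"
  define Bi where "Bi = matrix_inv B"
  have BBi: "B ** Bi = mat 1" "Bi ** B = mat 1"
    using matrix_inv_props[OF B] unfolding Bi_def by auto
  have pre: "(*v) B -` box l u = (*v) Bi ` box l u"
  proof (intro set_eqI iffI)
    fix x assume "x \<in> (*v) B -` box l u"
    then have "B *v x \<in> box l u" by simp
    moreover have "x = Bi *v (B *v x)" using BBi by (simp add: matrix_vector_mul_assoc)
    ultimately show "x \<in> (*v) Bi ` box l u" by (metis image_eqI)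
  next
    fix x assume "x \<in> (*v) Bi ` box l u"
    then obtain y where "y \<in> box l u" "x = Bi *v y" by auto
    then show "x \<in> (*v) B -` box l u" using BBi by (simp add: matrix_vector_mul_assoc)
  qed
  have bor: "(*v) B -` box l u \<in> sets borel"
    by (intro borel_open open_vimage) (auto intro: linear_continuous_on bl_mv)
  have bdd: "bounded ((*v) Bi ` box l u)"
    using matrix_vector_mul_linear linear_conv_bounded_linear
    by (intro bounded_linear_image bounded_box) auto
  have det1: "\<bar>det B\<bar> * \<bar>det Bi\<bar> = 1"
    using BBi by (simp add: abs_mult[symmetric] det_mul[symmetric])
  have "emeasure (density (distr lborel borel ((*v) B)) (\<lambda>_. ennreal \<bar>det B\<bar>)) (box l u)
      = ennreal \<bar>det B\<bar> * emeasure lborel ((*v) B -` box l u)"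
    using mv_meas[of B] by (simp add: emeasure_density nn_integral_cmult_indicator emeasure_distr)
  also have "emeasure lborel ((*v) B -` box l u) = ennreal (measure lborel ((*v) B -` box l u))"
    using emeasure_bounded_finite[OF bdd] pre by (intro emeasure_eq_ennreal_measure) auto
  also have "measure lborel ((*v) B -` box l u) = measure lebesgue ((*v) Bi ` box l u)"
    using bor pre by simp
  also have "\<dots> = \<bar>det (matrix ((*v) Bi))\<bar> * measure lebesgue (box l u)"
    by (intro measure_lebesgue_linear_transformation) (auto intro: matrix_vector_mul_linear)
  also have "\<dots> = \<bar>det Bi\<bar> * (\<Prod>b\<in>Basis. (u - l) \<bullet> b)"
    using le by (simp add: measure_lborel_box_eq)
  finally show "emeasure (density (distr lborel borel ((*v) B)) (\<lambda>_. ennreal \<bar>det B\<bar>)) (box l u) = (\<Prod>b\<in>Basis. (u - l) \<bullet> b)"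
    using det1 le by (simp add: ennreal_mult'[symmetric] mult.assoc[symmetric] prod_nonneg)
qed simp

lemma nn_integral_linear:
  fixes B :: "real^3^3" and f :: "real^3 \<Rightarrow> ennreal"
  assumes B: "invertible B" and f[measurable]: "f \<in> borel_measurable borel"
  shows "(\<integral>\<^sup>+x. f (B *v x) \<partial>lborel) = ennreal (1 / \<bar>det B\<bar>) * (\<integral>\<^sup>+x. f x \<partial>lborel)"
proof -
  have d: "det B \<noteq> 0" using B by (simp add: invertible_det_nz)
  have [measurable]: "(*v) B \<in> borel_measurable borel"
    by (intro borel_measurable_continuous_onI linear_continuous_on bl_mv)
  have "(\<integral>\<^sup>+x. f x \<partial>lborel) = (\<integral>\<^sup>+x. f x \<partial>density (distr lborel borel ((*v) B)) (\<lambda>_. ennreal \<bar>det B\<bar>))"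
    using lborel_linear[OF B] by simp
  also have "\<dots> = ennreal \<bar>det B\<bar> * (\<integral>\<^sup>+x. f (B *v x) \<partial>lborel)"
    by (simp add: nn_integral_density nn_integral_distr nn_integral_cmult)
  finally have "(\<integral>\<^sup>+x. f x \<partial>lborel) = ennreal \<bar>det B\<bar> * (\<integral>\<^sup>+x. f (B *v x) \<partial>lborel)" .
  then have "ennreal (1 / \<bar>det B\<bar>) * (\<integral>\<^sup>+x. f x \<partial>lborel) = (ennreal (1 / \<bar>det B\<bar>) * ennreal \<bar>det B\<bar>) * (\<integral>\<^sup>+x. f (B *v x) \<partial>lborel)"
    by (simp add: mult.assoc)
  also have "ennreal (1 / \<bar>det B\<bar>) * ennreal \<bar>det B\<bar> = 1"
    using d by (simp add: ennreal_mult'[symmetric])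
  finally show ?thesis by simp
qed

lemma nn_integral_transl:
  fixes f :: "real^3 \<Rightarrow> ennreal" and c :: "real^3"
  assumes [measurable]: "f \<in> borel_measurable borel"
  shows "(\<integral>\<^sup>+x. f (c + x) \<partial>lborel) = (\<integral>\<^sup>+x. f x \<partial>lborel)"
proof -
  have "(\<integral>\<^sup>+x. f x \<partial>lborel) = (\<integral>\<^sup>+x. f x \<partial>distr lborel borel ((+) c))"
    by (simp add: lborel_distr_plus)
  also have "\<dots> = (\<integral>\<^sup>+x. f (c + x) \<partial>lborel)"
    by (simp add: nn_integral_distr)
  finally show ?thesis by simp
qed

lemma nn_integral_refl:
  fixes f :: "real^3 \<Rightarrow> ennreal" and c :: "real^3"
  assumes [measurable]: "f \<in> borel_measurable borel"
  shows "(\<integral>\<^sup>+y. f (c - y) \<partial>lborel) = (\<integral>\<^sup>+x. f x \<partial>lborel)"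
proof -
  have eq: "lborel = density (distr lborel borel ((-) c)) (\<lambda>x. 1)"
    using lborel_affine[of "-1" c] by simp
  have "(\<integral>\<^sup>+x. f x \<partial>density (distr lborel borel ((-) c)) (\<lambda>x. 1)) = (\<integral>\<^sup>+y. f (c - y) \<partial>lborel)"
    by (simp add: nn_integral_density nn_integral_distr)
  then show ?thesis using eq by metis
qed

lemma one_dim_half: "(\<integral>\<^sup>+t\<in>{0::real..}. ennreal (1 / (1 + t)^2) \<partial>lborel) = 1"
proof -
  have "(\<integral>\<^sup>+t\<in>{0::real..}. ennreal (1 / (1 + t)^2) \<partial>lborel) = ennreal (0 - (- inverse (1 + 0)))"
  proof (rule nn_integral_FTC_atLeast)
    show "(\<lambda>t::real. 1 / (1 + t)^2) \<in> borel_measurable borel" by measurable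
    fix x :: real assume "0 \<le> x"
    then show "((\<lambda>t. - inverse (1 + t)) has_real_derivative 1 / (1 + x)^2) (at x)"
      by (auto intro!: derivative_eq_intros simp: power2_eq_square field_simps)
    show "0 \<le> 1 / (1 + x)^2" by simp
  next
    have "filterlim (\<lambda>t::real. 1 + t) at_top at_top"
      by (rule filterlim_tendsto_add_at_top[OF tendsto_const filterlim_ident])
    then have "((\<lambda>t::real. inverse (1 + t)) \<longlongrightarrow> 0) at_top"
      by (rule tendsto_inverse_0_at_top)
    then show "((\<lambda>t::real. - inverse (1 + t)) \<longlongrightarrow> 0) at_top"
      using tendsto_minus by fastforce
  qed
  then show ?thesis by simp
qed

lemma one_dim: "(\<integral>\<^sup>+t. ennreal (1 / (1 + \<bar>t::real\<bar>)^2) \<partial>lborel) \<le> 2"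
proof -
  define g where "g t = ennreal (1 / (1 + t)^2) * indicator {0::real..} t" for t
  have [measurable]: "g \<in> borel_measurable borel" unfolding g_def by measurable
  have "(\<integral>\<^sup>+t. ennreal (1 / (1 + \<bar>t::real\<bar>)^2) \<partial>lborel) \<le> (\<integral>\<^sup>+t. g t + g (0 + (-1) * t) \<partial>lborel)"
  proof (rule nn_integral_mono)
    fix t :: real
    show "ennreal (1 / (1 + \<bar>t\<bar>)^2) \<le> g t + g (0 + (-1) * t)"
    proof (cases "t \<ge> 0")
      case True
      then have "ennreal (1 / (1 + \<bar>t\<bar>)^2) = g t" by (simp add: g_def)
      then show ?thesis by (simp add: add_increasing2)
    next
      case False
      then have "ennreal (1 / (1 + \<bar>t\<bar>)^2) = g (0 + (-1) * t)" by (simp add: g_def)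
      then show ?thesis by (simp add: add_increasing)
    qed
  qed
  also have "\<dots> = (\<integral>\<^sup>+t. g t \<partial>lborel) + (\<integral>\<^sup>+t. g (0 + (-1) * t) \<partial>lborel)"
    by (rule nn_integral_add) auto
  also have "(\<integral>\<^sup>+t. g (0 + (-1) * t) \<partial>lborel) = (\<integral>\<^sup>+t. g t \<partial>lborel)"
    using nn_integral_real_affine[of g "-1" 0] by simp
  also have "(\<integral>\<^sup>+t. g t \<partial>lborel) = 1" using one_dim_half unfolding g_def by simp
  finally show ?thesis by (simp add: one_add_one)
qed

lemma KE_finite:
  assumes E: "E \<ge> 6"
  shows "(\<integral>\<^sup>+(z::real^3). ennreal ((1 + norm z) powr (-E)) \<partial>lborel) < top"
proof -
  have pt: "(1 + norm z) powr (-E) \<le> (\<Prod>b\<in>Basis. 1 / (1 + \<bar>z \<bullet> b\<bar>)^2)" for z :: "real^3"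
  proof -
    have "(1 + norm z) powr (-E) \<le> (1 + norm z) powr (-6)"
      using E by (intro powr_mono) auto
    also have "\<dots> = (1 / (1 + norm z)^2) ^ 3"
      by (simp add: powr_minus powr_realpow[symmetric] power_divide powr_powr[symmetric] field_simps)
    also have "\<dots> = (\<Prod>b\<in>(Basis::(real^3) set). 1 / (1 + norm z)^2)"
      by simp
    also have "\<dots> \<le> (\<Prod>b\<in>Basis. 1 / (1 + \<bar>z \<bullet> b\<bar>)^2)"
    proof (rule prod_mono)
      fix b :: "real^3" assume "b \<in> Basis"
      then have "\<bar>z \<bullet> b\<bar> \<le> norm z" by (rule Basis_le_norm)
      then show "0 \<le> 1 / (1 + norm z)^2 \<and> 1 / (1 + norm z)^2 \<le> 1 / (1 + \<bar>z \<bullet> b\<bar>)^2"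
        by (auto intro!: divide_left_mono power_mono mult_pos_pos)
    qed
    finally show ?thesis .
  qed
  have "(\<integral>\<^sup>+(z::real^3). ennreal ((1 + norm z) powr (-E)) \<partial>lborel)
      \<le> (\<integral>\<^sup>+(z::real^3). ennreal (\<Prod>b\<in>Basis. 1 / (1 + \<bar>z \<bullet> b\<bar>)^2) \<partial>lborel)"
    by (intro nn_integral_mono ennreal_leI pt)
  also have "\<dots> = (\<Prod>b\<in>(Basis::(real^3) set). (\<integral>\<^sup>+t. ennreal (1 / (1 + \<bar>t\<bar>)^2) \<partial>lborel))"
    using nn_integral_lborel_prod[where 'a="real^3", of "\<lambda>b t. 1 / (1 + \<bar>t\<bar>)^2"] by (simp add: prod_ennreal)
  also have "\<dots> = (\<integral>\<^sup>+t. ennreal (1 / (1 + \<bar>t\<bar>)^2) \<partial>lborel) ^ 3"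
    by simp
  also have "\<dots> \<le> 2 ^ 3"
    by (rule power_mono[OF one_dim]) simp
  also have "\<dots> < top" by (simp add: ennreal_power[symmetric] del: ennreal_power)
  finally show ?thesis .
qed

definition KE :: "real \<Rightarrow> ennreal" where
  "KE E = (\<integral>\<^sup>+(z::real^3). ennreal ((1 + norm z) powr (-E)) \<partial>lborel)"

lemma e_meas[measurable]: "e \<in> borel_measurable borel"
  unfolding e_def by (intro borel_measurable_continuous_onI continuous_intros)

lemma inner_gam: "x \<bullet> gam \<xi> = x$1 * \<xi> + x$2 * \<xi>^2 + x$3 * \<xi>^3"
  by (simp add: gam_def inner_vec_def sum_3)

lemma phiT_meas[measurable]: "(\<lambda>y. phiT A c E y) \<in> borel_measurable borel"
  unfolding phiT_def wT_def by measurable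

lemma det_MT: "det (MT I) = 12 * (Sup I - Inf I)^6"
  by (simp add: MT_def Let_def det_3; algebra)

lemma invertible_matrix_inv:
  fixes M :: "real^3^3" assumes "invertible M" shows "invertible (matrix_inv M)"
  using matrix_inv_props[OF assms] unfolding invertible_def by blast

lemma TA_inv: assumes "Sup I - Inf I \<noteq> 0" shows "invertible (TA I)"
proof -
  have "invertible (MT I)" using assms by (simp add: invertible_det_nz det_MT)
  then show ?thesis unfolding TA_def by (intro scalar_invertible invertible_matrix_inv) auto
qed

lemma phi_integral:
  fixes A :: "real^3^3" assumes A: "invertible A"
  shows "(\<integral>\<^sup>+y. ennreal (phiT A c E y) \<partial>lborel) = KE E"
proof -
  define Bi where "Bi = matrix_inv A"
  have Bi: "invertible Bi" unfolding Bi_def by (rule invertible_matrix_inv[OF A])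
  have dA: "det A \<noteq> 0" using A by (simp add: invertible_det_nz)
  have det1: "det A * det Bi = 1"
    using matrix_inv_props[OF A] unfolding Bi_def by (simp add: det_mul[symmetric])
  define F where "F z = ennreal ((1 + norm z) powr (-E))" for z :: "real^3"
  have [measurable]: "F \<in> borel_measurable borel" unfolding F_def by measurable
  have "(\<integral>\<^sup>+y. ennreal (phiT A c E y) \<partial>lborel) = (\<integral>\<^sup>+y. ennreal (1 / \<bar>det A\<bar>) * F (Bi *v (-c + y)) \<partial>lborel)"
    by (intro nn_integral_cong) (simp add: phiT_def wT_def F_def Bi_def ennreal_mult'[symmetric] divide_inverse mult.commute)
  also have "\<dots> = ennreal (1 / \<bar>det A\<bar>) * (\<integral>\<^sup>+y. F (Bi *v (-c + y)) \<partial>lborel)"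
    by (rule nn_integral_cmult) measurable
  also have "(\<integral>\<^sup>+y. F (Bi *v (-c + y)) \<partial>lborel) = (\<integral>\<^sup>+y. F (Bi *v y) \<partial>lborel)"
    by (rule nn_integral_transl[where f = "\<lambda>y. F (Bi *v y)"]) measurable
  also have "\<dots> = ennreal (1 / \<bar>det Bi\<bar>) * KE E"
    unfolding KE_def F_def[symmetric] by (rule nn_integral_linear[OF Bi]) measurable
  also have "ennreal (1 / \<bar>det A\<bar>) * (ennreal (1 / \<bar>det Bi\<bar>) * KE E) = ennreal (1 / \<bar>det A\<bar> * (1 / \<bar>det Bi\<bar>)) * KE E"
    by (simp add: ennreal_mult[symmetric] mult.assoc[symmetric])
  also have "1 / \<bar>det A\<bar> * (1 / \<bar>det Bi\<bar>) = 1"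
    using det1 by (simp add: abs_mult[symmetric])
  finally show ?thesis by simp
qed

lemma g_ok_meas: assumes "g_ok g" shows "(\<lambda>\<xi>. indicator {0..1::real} \<xi> *\<^sub>R g \<xi>) \<in> borel_measurable borel"
proof -
  have "integrable lborel (\<lambda>\<xi>. indicator {0..1::real} \<xi> *\<^sub>R g \<xi>)"
    using assms unfolding g_ok_def set_integrable_def by simp
  then have "(\<lambda>\<xi>. indicator {0..1::real} \<xi> *\<^sub>R g \<xi>) \<in> borel_measurable lborel"
    by (rule borel_measurable_integrable)
  then show ?thesis by simp
qed

lemma ext_alt:
  assumes "J \<subseteq> {0..1}"
  shows "ext J g x = (\<integral>\<xi>. indicator J \<xi> *\<^sub>R ((indicator {0..1} \<xi> *\<^sub>R g \<xi>) * e (x \<bullet> gam \<xi>)) \<partial>lborel)"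
  unfolding ext_def set_lebesgue_integral_def
proof -
  have eq: "indicator J \<xi> *\<^sub>R (g \<xi> * e (x \<bullet> gam \<xi>)) = indicator J \<xi> *\<^sub>R ((indicator {0..1} \<xi> *\<^sub>R g \<xi>) * e (x \<bullet> gam \<xi>))" for \<xi>
  proof (cases "\<xi> \<in> J")
    case True
    then have "\<xi> \<in> {0..1}" using assms by blast
    then show ?thesis by simp
  qed simp
  show "(\<integral>\<xi>. indicator J \<xi> *\<^sub>R (g \<xi> * e (x \<bullet> gam \<xi>)) \<partial>lborel) = (\<integral>\<xi>. indicator J \<xi> *\<^sub>R ((indicator {0..1} \<xi> *\<^sub>R g \<xi>) * e (x \<bullet> gam \<xi>)) \<partial>lborel)"
    by (rule Bochner_Integration.integral_cong[OF refl eq])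
qed

lemma gam_cont: "continuous_on UNIV (\<lambda>p::(real^3)\<times>real. fst p \<bullet> gam (snd p))"
  unfolding inner_gam by (intro continuous_intros)

lemma gam_meas[measurable]: "(\<lambda>p::(real^3)\<times>real. fst p \<bullet> gam (snd p)) \<in> borel_measurable (borel \<Otimes>\<^sub>M borel)"
  unfolding borel_prod by (rule borel_measurable_continuous_onI[OF gam_cont])

lemma ext_meas:
  assumes g: "g_ok g" and J: "J \<subseteq> {0..1}" "J \<in> sets borel"
  shows "ext J g \<in> borel_measurable borel"
proof -
  define G where "G = (\<lambda>\<xi>. indicator {0..1::real} \<xi> *\<^sub>R g \<xi>)"
  have G: "G \<in> borel_measurable borel" unfolding G_def by (rule g_ok_meas[OF g])
  have s: "sets (borel \<Otimes>\<^sub>M lborel) = sets (borel \<Otimes>\<^sub>M (borel::real measure))"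
    by (intro sets_pair_measure_cong) auto
  have m1: "(\<lambda>p::(real^3)\<times>real. G (snd p)) \<in> borel_measurable (borel \<Otimes>\<^sub>M borel)"
    by (rule measurable_compose[OF measurable_snd G])
  have m2: "(\<lambda>p::(real^3)\<times>real. e (fst p \<bullet> gam (snd p))) \<in> borel_measurable (borel \<Otimes>\<^sub>M borel)"
    by (rule measurable_compose[OF gam_meas e_meas])
  have m3: "(\<lambda>p::(real^3)\<times>real. indicator J (snd p) :: real) \<in> borel_measurable (borel \<Otimes>\<^sub>M borel)"
    by (rule measurable_compose[OF measurable_snd borel_measurable_indicator[OF J(2)]])
  have "(\<lambda>p::(real^3)\<times>real. indicator J (snd p) *\<^sub>R (G (snd p) * e (fst p \<bullet> gam (snd p)))) \<in> borel_measurable (borel \<Otimes>\<^sub>M borel)"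
    by (intro borel_measurable_scaleR borel_measurable_times m1 m2 m3)
  then have "(\<lambda>p::(real^3)\<times>real. indicator J (snd p) *\<^sub>R (G (snd p) * e (fst p \<bullet> gam (snd p)))) \<in> borel_measurable (borel \<Otimes>\<^sub>M lborel)"
    using s by (simp cong: measurable_cong_sets)
  then have "case_prod (\<lambda>x \<xi>. indicator J \<xi> *\<^sub>R (G \<xi> * e (x \<bullet> gam \<xi>))) \<in> borel_measurable (borel \<Otimes>\<^sub>M lborel)"
    by (simp add: case_prod_beta')
  then have *: "(\<lambda>x. \<integral>\<xi>. indicator J \<xi> *\<^sub>R (G \<xi> * e (x \<bullet> gam \<xi>)) \<partial>lborel) \<in> borel_measurable borel"
    by (rule lborel.borel_measurable_lebesgue_integral)
  have "ext J g = (\<lambda>x. \<integral>\<xi>. indicator J \<xi> *\<^sub>R (G \<xi> * e (x \<bullet> gam \<xi>)) \<partial>lborel)"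
    unfolding G_def by (rule ext) (rule ext_alt[OF J(1)])
  then show ?thesis using * by (simp only:)
qed

lemma phiT_nonneg: "0 \<le> phiT A c E y"
  by (simp add: phiT_def wT_def)

lemma conv_integrand_meas:
  assumes F: "F \<in> borel_measurable borel"
  shows "(\<lambda>q::(real^3)\<times>(real^3). ennreal (cmod (F (fst q - snd q)) ^ p * phiT A c E (snd q))) \<in> borel_measurable (lborel \<Otimes>\<^sub>M lborel)"
proof -
  have s: "sets (lborel \<Otimes>\<^sub>M lborel) = sets (borel \<Otimes>\<^sub>M (borel::(real^3) measure))"
    by (intro sets_pair_measure_cong) auto
  have d: "(\<lambda>q::(real^3)\<times>(real^3). fst q - snd q) \<in> borel_measurable (borel \<Otimes>\<^sub>M borel)"
    unfolding borel_prod by (intro borel_measurable_continuous_onI continuous_intros)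
  have m1: "(\<lambda>q::(real^3)\<times>(real^3). F (fst q - snd q)) \<in> borel_measurable (borel \<Otimes>\<^sub>M borel)"
    by (rule measurable_compose[OF d F])
  have m2: "(\<lambda>q::(real^3)\<times>(real^3). phiT A c E (snd q)) \<in> borel_measurable (borel \<Otimes>\<^sub>M borel)"
    by (rule measurable_compose[OF measurable_snd phiT_meas])
  have "(\<lambda>q::(real^3)\<times>(real^3). ennreal (cmod (F (fst q - snd q)) ^ p * phiT A c E (snd q))) \<in> borel_measurable (borel \<Otimes>\<^sub>M borel)"
    apply (rule measurable_compose[OF _ measurable_ennreal])
    apply (rule borel_measurable_times)
     apply (rule borel_measurable_power)
     apply (rule measurable_compose[OF m1 borel_measurable_norm])
    apply (rule m2)
    done
  then show ?thesis using s by (simp cong: measurable_cong_sets)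
qed

lemma conv_meas:
  assumes F: "F \<in> borel_measurable borel"
  shows "(\<lambda>x. convI F p I E x) \<in> borel_measurable borel"
proof -
  have "case_prod (\<lambda>x y. ennreal (cmod (F (x - y)) ^ p * phiT (TA I) (Tc I) E y)) \<in> borel_measurable (lborel \<Otimes>\<^sub>M lborel)"
    using conv_integrand_meas[OF F, of p "TA I" "Tc I" E] by (simp add: case_prod_beta')
  then have "(\<lambda>x. \<integral>\<^sup>+y. ennreal (cmod (F (x - y)) ^ p * phiT (TA I) (Tc I) E y) \<partial>lborel) \<in> borel_measurable lborel"
    by (rule lborel.borel_measurable_nn_integral)
  then show ?thesis unfolding convI_def by simp
qed

lemma pow_meas:
  assumes F: "F \<in> borel_measurable borel"
  shows "(\<lambda>x. ennreal (cmod (F x) ^ p)) \<in> borel_measurable borel"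
  apply (rule measurable_compose[OF _ measurable_ennreal])
  apply (rule borel_measurable_power)
  apply (rule measurable_compose[OF F borel_measurable_norm])
  done

lemma conv_total:
  assumes F: "F \<in> borel_measurable borel" and A: "invertible (TA I)"
  shows "(\<integral>\<^sup>+x. convI F p I E x \<partial>lborel) = (\<integral>\<^sup>+x. ennreal (cmod (F x) ^ p) \<partial>lborel) * KE E"
proof -
  define N where "N = (\<integral>\<^sup>+x. ennreal (cmod (F x) ^ p) \<partial>lborel)"
  have pm: "(\<lambda>x. ennreal (cmod (F x) ^ p)) \<in> borel_measurable borel" by (rule pow_meas[OF F])
  have cm: "case_prod (\<lambda>x y. ennreal (cmod (F (x - y)) ^ p * phiT (TA I) (Tc I) E y)) \<in> borel_measurable (lborel \<Otimes>\<^sub>M lborel)"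
    using conv_integrand_meas[OF F, of p "TA I" "Tc I" E] by (simp add: case_prod_beta')
  have "(\<integral>\<^sup>+x. convI F p I E x \<partial>lborel) = (\<integral>\<^sup>+x. \<integral>\<^sup>+y. ennreal (cmod (F (x - y)) ^ p * phiT (TA I) (Tc I) E y) \<partial>lborel \<partial>lborel)"
    unfolding convI_def by simp
  also have "\<dots> = (\<integral>\<^sup>+y. \<integral>\<^sup>+x. ennreal (cmod (F (x - y)) ^ p * phiT (TA I) (Tc I) E y) \<partial>lborel \<partial>lborel)"
    using lborel_pair.Fubini'[OF cm] by simp
  also have "\<dots> = (\<integral>\<^sup>+y. N * ennreal (phiT (TA I) (Tc I) E y) \<partial>lborel)"
  proof (rule nn_integral_cong)
    fix y :: "real^3"
    have m: "(\<lambda>x. ennreal (cmod (F (- y + x)) ^ p)) \<in> borel_measurable borel"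
      by (rule measurable_compose[OF _ pm]) (intro borel_measurable_continuous_onI continuous_intros)
    have "(\<integral>\<^sup>+x. ennreal (cmod (F (x - y)) ^ p * phiT (TA I) (Tc I) E y) \<partial>lborel)
        = (\<integral>\<^sup>+x. ennreal (cmod (F (- y + x)) ^ p) * ennreal (phiT (TA I) (Tc I) E y) \<partial>lborel)"
      by (intro nn_integral_cong) (simp add: ennreal_mult' phiT_nonneg)
    also have "\<dots> = (\<integral>\<^sup>+x. ennreal (cmod (F (- y + x)) ^ p) \<partial>lborel) * ennreal (phiT (TA I) (Tc I) E y)"
      by (rule nn_integral_multc) (use m in simp)
    also have "(\<integral>\<^sup>+x. ennreal (cmod (F (- y + x)) ^ p) \<partial>lborel) = N"
      unfolding N_def by (rule nn_integral_transl[OF pm])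
    finally show "(\<integral>\<^sup>+x. ennreal (cmod (F (x - y)) ^ p * phiT (TA I) (Tc I) E y) \<partial>lborel) = N * ennreal (phiT (TA I) (Tc I) E y)" .
  qed
  also have "\<dots> = N * (\<integral>\<^sup>+y. ennreal (phiT (TA I) (Tc I) E y) \<partial>lborel)"
    by (rule nn_integral_cmult) (use measurable_compose[OF phiT_meas measurable_ennreal] in simp)
  also have "\<dots> = N * KE E" by (simp add: phi_integral[OF A])
  finally show ?thesis unfolding N_def .
qed

lemma conv_zero:
  assumes F: "F \<in> borel_measurable borel" and Z: "(\<integral>\<^sup>+x. ennreal (cmod (F x) ^ p) \<partial>lborel) = 0"
  shows "convI F p I E x = 0"
proof -
  have pm: "(\<lambda>x. ennreal (cmod (F x) ^ p)) \<in> borel_measurable borel" by (rule pow_meas[OF F])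
  have m: "(\<lambda>y. ennreal (cmod (F (x - y)) ^ p)) \<in> borel_measurable borel"
    by (rule measurable_compose[OF _ pm]) (intro borel_measurable_continuous_onI continuous_intros)
  have "(\<integral>\<^sup>+y. ennreal (cmod (F (x - y)) ^ p) \<partial>lborel) = 0"
    using nn_integral_refl[OF pm, of x] Z by simp
  then have "AE y in lborel. ennreal (cmod (F (x - y)) ^ p) = 0"
    using m by (simp add: nn_integral_0_iff_AE)
  then have "AE y in lborel. ennreal (cmod (F (x - y)) ^ p * phiT (TA I) (Tc I) E y) = 0"
    by eventually_elim (simp add: ennreal_mult' phiT_nonneg)
  moreover have "(\<lambda>y. ennreal (cmod (F (x - y)) ^ p * phiT (TA I) (Tc I) E y)) \<in> borel_measurable lborel"
    using measurable_Pair2[OF conv_integrand_meas[OF F, of p "TA I" "Tc I" E], of x] by simp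
  ultimately show ?thesis unfolding convI_def by (simp add: nn_integral_0_iff_AE)
qed

lemma powr_id1:
  fixes a f :: real assumes "0 \<le> a" "0 \<le> f"
  shows "(a^8 * f) powr (1/4) * f powr (3/4) = a^2 * f"
proof (cases "a = 0")
  case False
  then have a: "a > 0" using assms by simp
  have "(a^8 * f) powr (1/4) = (a^8) powr (1/4) * f powr (1/4)"
    using assms by (simp add: powr_mult)
  also have "(a^8) powr (1/4) = a^2"
  proof -
    have "a^8 = (a^2) powr 4" using powr_realpow[of "a^2" 4] a by simp
    then have "(a^8) powr (1/4) = ((a^2) powr 4) powr (1/4)" by (simp only:)
    also have "\<dots> = (a^2) powr (4 * (1/4))" by (rule powr_powr)
    finally show ?thesis using a by simp
  qed
  finally have "(a^8 * f) powr (1/4) * f powr (3/4) = a^2 * (f powr (1/4) * f powr (3/4))"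
    by simp
  also have "f powr (1/4) * f powr (3/4) = f"
    using assms by (simp add: powr_add[symmetric])
  finally show ?thesis .
qed simp

lemma powr_id2:
  fixes a f :: real assumes "0 \<le> a" "0 \<le> f"
  shows "(a^4 * f) powr (1/4) * (a^12 * f) powr (3/4) = a^10 * f"
proof (cases "a = 0")
  case False
  then have a: "a > 0" using assms by simp
  have "(a^4 * f) powr (1/4) = (a^4) powr (1/4) * f powr (1/4)"
    using assms by (simp add: powr_mult)
  also have "(a^4) powr (1/4) = a"
  proof -
    have "a^4 = a powr 4" using powr_realpow[of a 4] a by simp
    then have "(a^4) powr (1/4) = (a powr 4) powr (1/4)" by (simp only:)
    also have "\<dots> = a powr (4 * (1/4))" by (rule powr_powr)
    finally show ?thesis using a by simp
  qed
  finally have 1: "(a^4 * f) powr (1/4) = a * f powr (1/4)" .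
  have "(a^12 * f) powr (3/4) = (a^12) powr (3/4) * f powr (3/4)"
    using assms by (simp add: powr_mult)
  also have "(a^12) powr (3/4) = a^9"
  proof -
    have "a^12 = a powr 12" using powr_realpow[of a 12] a by simp
    then have "(a^12) powr (3/4) = (a powr 12) powr (3/4)" by (simp only:)
    also have "\<dots> = a powr (12 * (3/4))" by (rule powr_powr)
    also have "\<dots> = a powr 9" by simp
    also have "\<dots> = a^9" using powr_realpow[of a 9] a by simp
    finally show ?thesis .
  qed
  finally have 2: "(a^12 * f) powr (3/4) = a^9 * f powr (3/4)" .
  have "f powr (1/4) * f powr (3/4) = f"
    using assms by (simp add: powr_add[symmetric])
  moreover have "a^10 = a * a^9" by (simp add: eval_nat_numeral)
  ultimately show ?thesis unfolding 1 2 by (simp add: algebra_simps)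
qed simp

lemma conv_holder1:
  assumes F: "F \<in> borel_measurable borel"
  shows "convI F 2 I E x \<le> enn_powr (1/4) (convI F 8 I E x) * enn_powr (3/4) (\<integral>\<^sup>+y. ennreal (phiT (TA I) (Tc I) E y) \<partial>lborel)"
proof -
  define \<phi> where "\<phi> = phiT (TA I) (Tc I) E"
  have pm: "(\<lambda>x. ennreal (cmod (F x) ^ 8)) \<in> borel_measurable borel" by (rule pow_meas[OF F])
  have m1: "(\<lambda>y. ennreal (cmod (F (x - y)) ^ 8 * \<phi> y)) \<in> borel_measurable lborel"
    using measurable_Pair2[OF conv_integrand_meas[OF F, of 8 "TA I" "Tc I" E], of x]
    by (simp add: \<phi>_def)
  have m2: "(\<lambda>y. ennreal (\<phi> y)) \<in> borel_measurable lborel"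
    unfolding \<phi>_def using measurable_compose[OF phiT_meas measurable_ennreal] by simp
  have "convI F 2 I E x = (\<integral>\<^sup>+y. enn_powr (1/4) (ennreal (cmod (F (x - y)) ^ 8 * \<phi> y)) * enn_powr (3/4) (ennreal (\<phi> y)) \<partial>lborel)"
    unfolding convI_def \<phi>_def[symmetric]
    by (intro nn_integral_cong) (simp add: phiT_nonneg \<phi>_def ennreal_mult'[symmetric] powr_id1)
  also have "\<dots> \<le> enn_powr (1/4) (\<integral>\<^sup>+y. ennreal (cmod (F (x - y)) ^ 8 * \<phi> y) \<partial>lborel) * enn_powr (3/4) (\<integral>\<^sup>+y. ennreal (\<phi> y) \<partial>lborel)"
    by (rule holder14[OF m1 m2])
  finally show ?thesis unfolding convI_def \<phi>_def .
qed

lemma conv_holder2: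
  assumes F: "F \<in> borel_measurable borel"
  shows "convI F 10 I E x \<le> enn_powr (1/4) (convI F 4 I E x) * enn_powr (3/4) (convI F 12 I E x)"
proof -
  define \<phi> where "\<phi> = phiT (TA I) (Tc I) E"
  have m1: "(\<lambda>y. ennreal (cmod (F (x - y)) ^ 4 * \<phi> y)) \<in> borel_measurable lborel"
    using measurable_Pair2[OF conv_integrand_meas[OF F, of 4 "TA I" "Tc I" E], of x]
    by (simp add: \<phi>_def)
  have m2: "(\<lambda>y. ennreal (cmod (F (x - y)) ^ 12 * \<phi> y)) \<in> borel_measurable lborel"
    using measurable_Pair2[OF conv_integrand_meas[OF F, of 12 "TA I" "Tc I" E], of x]
    by (simp add: \<phi>_def)
  have "convI F 10 I E x = (\<integral>\<^sup>+y. enn_powr (1/4) (ennreal (cmod (F (x - y)) ^ 4 * \<phi> y)) * enn_powr (3/4) (ennreal (cmod (F (x - y)) ^ 12 * \<phi> y)) \<partial>lborel)"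
    unfolding convI_def \<phi>_def[symmetric]
    by (intro nn_integral_cong) (simp add: phiT_nonneg \<phi>_def ennreal_mult'[symmetric] powr_id2)
  also have "\<dots> \<le> enn_powr (1/4) (\<integral>\<^sup>+y. ennreal (cmod (F (x - y)) ^ 4 * \<phi> y) \<partial>lborel) * enn_powr (3/4) (\<integral>\<^sup>+y. ennreal (cmod (F (x - y)) ^ 12 * \<phi> y) \<partial>lborel)"
    by (rule holder14[OF m1 m2])
  finally show ?thesis unfolding convI_def \<phi>_def .
qed

lemma main_bound:
  assumes A: "FA \<in> borel_measurable borel" and B: "FB \<in> borel_measurable borel"
    and I: "invertible (TA I)" and I': "invertible (TA I')"
  shows "(\<integral>\<^sup>+x. convI FA 2 I E x * convI FB 10 I' E x \<partial>lborel)
     \<le> enn_powr (3/4) (KE E) * (enn_powr (1/4) (\<integral>\<^sup>+x. convI FB 4 I' E x * convI FA 8 I E x \<partial>lborel)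
       * enn_powr (3/4) ((\<integral>\<^sup>+x. ennreal (cmod (FB x) ^ 12) \<partial>lborel) * KE E))"
proof -
  note [measurable] = conv_meas[OF A] conv_meas[OF B]
  have "(\<integral>\<^sup>+x. convI FA 2 I E x * convI FB 10 I' E x \<partial>lborel)
      \<le> (\<integral>\<^sup>+x. enn_powr (3/4) (KE E) * (enn_powr (1/4) (convI FB 4 I' E x * convI FA 8 I E x) * enn_powr (3/4) (convI FB 12 I' E x)) \<partial>lborel)"
  proof (rule nn_integral_mono)
    fix x
    have h1: "convI FA 2 I E x \<le> enn_powr (1/4) (convI FA 8 I E x) * enn_powr (3/4) (KE E)"
      using conv_holder1[OF A, of I E x] by (simp add: phi_integral[OF I])
    have h2: "convI FB 10 I' E x \<le> enn_powr (1/4) (convI FB 4 I' E x) * enn_powr (3/4) (convI FB 12 I' E x)"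
      by (rule conv_holder2[OF B])
    have "convI FA 2 I E x * convI FB 10 I' E x \<le> (enn_powr (1/4) (convI FA 8 I E x) * enn_powr (3/4) (KE E)) * (enn_powr (1/4) (convI FB 4 I' E x) * enn_powr (3/4) (convI FB 12 I' E x))"
      by (rule mult_mono[OF h1 h2]) auto
    also have "\<dots> = enn_powr (3/4) (KE E) * (enn_powr (1/4) (convI FB 4 I' E x * convI FA 8 I E x) * enn_powr (3/4) (convI FB 12 I' E x))"
      by (simp add: ep_mult ac_simps)
    finally show "convI FA 2 I E x * convI FB 10 I' E x \<le> enn_powr (3/4) (KE E) * (enn_powr (1/4) (convI FB 4 I' E x * convI FA 8 I E x) * enn_powr (3/4) (convI FB 12 I' E x))" .
  qed
  also have "\<dots> = enn_powr (3/4) (KE E) * (\<integral>\<^sup>+x. enn_powr (1/4) (convI FB 4 I' E x * convI FA 8 I E x) * enn_powr (3/4) (convI FB 12 I' E x) \<partial>lborel)"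
    by (rule nn_integral_cmult) simp
  also have "(\<integral>\<^sup>+x. enn_powr (1/4) (convI FB 4 I' E x * convI FA 8 I E x) * enn_powr (3/4) (convI FB 12 I' E x) \<partial>lborel)
      \<le> enn_powr (1/4) (\<integral>\<^sup>+x. convI FB 4 I' E x * convI FA 8 I E x \<partial>lborel) * enn_powr (3/4) (\<integral>\<^sup>+x. convI FB 12 I' E x \<partial>lborel)"
    by (rule holder14) simp_all
  also have "(\<integral>\<^sup>+x. convI FB 12 I' E x \<partial>lborel) = (\<integral>\<^sup>+x. ennreal (cmod (FB x) ^ 12) \<partial>lborel) * KE E"
    by (rule conv_total[OF B I'])
  finally show ?thesis by (simp add: mult_left_mono)
qed

definition N12 :: "(real^3 \<Rightarrow> complex) \<Rightarrow> ennreal" where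
  "N12 F = (\<integral>\<^sup>+x. ennreal (cmod (F x) ^ 12) \<partial>lborel)"

lemma L12_N12: "L12 F = enn_powr (1/12) (N12 F)"
  by (simp add: L12_def N12_def)

lemma N12_L12: "N12 F = L12 F ^ 12"
  by (simp add: L12_N12 ep_pow)

lemma norm_e[simp]: "cmod (e t) = 1"
proof -
  have "e t = exp (\<i> * complex_of_real (2 * pi * t))" unfolding e_def by (simp add: ac_simps)
  then show ?thesis by (simp only: norm_exp_i_times)
qed

lemma e_add: "e (a + b) = e a * e b"
  unfolding e_def by (simp add: distrib_left exp_add)

lemma part_eq: "part \<sigma> l r = (\<lambda>k. {l + real k * \<sigma> .. l + (real k + 1) * \<sigma>}) ` {..<nat \<lfloor>(r - l) / \<sigma>\<rfloor>}"
  unfolding part_def by blast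

lemma part_sum:
  assumes "\<sigma> > 0"
  shows "sum F (part \<sigma> l r) = (\<Sum>k<nat \<lfloor>(r - l) / \<sigma>\<rfloor>. F {l + real k * \<sigma> .. l + (real k + 1) * \<sigma>})"
proof -
  have "inj_on (\<lambda>k. {l + real k * \<sigma> .. l + (real k + 1) * \<sigma>}) {..<nat \<lfloor>(r - l) / \<sigma>\<rfloor>}"
  proof (rule inj_onI)
    fix k k' :: nat
    assume "{l + real k * \<sigma> .. l + (real k + 1) * \<sigma>} = {l + real k' * \<sigma> .. l + (real k' + 1) * \<sigma>}"
    moreover have "l + real k * \<sigma> \<le> l + (real k + 1) * \<sigma>" "l + real k' * \<sigma> \<le> l + (real k' + 1) * \<sigma>"
      using assms by (simp_all add: algebra_simps)
    ultimately have "l + real k * \<sigma> = l + real k' * \<sigma>" by (simp add: Icc_eq_Icc)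
    then show "k = k'" using assms by simp
  qed
  then show ?thesis unfolding part_eq by (rule sum.reindex_cong) auto
qed

lemma ext_integrable:
  assumes g: "g_ok g" and J: "J \<subseteq> {0..1}" "J \<in> sets borel"
  shows "set_integrable lborel J (\<lambda>\<xi>. g \<xi> * e (x \<bullet> gam \<xi>))"
proof (rule set_integrable_bound)
  show "set_integrable lborel J g"
  proof (rule set_integrable_subset[OF _ _ J(1)])
    show "set_integrable lborel {0..1} g" using g unfolding g_ok_def .
    show "J \<in> sets lborel" using J(2) by simp
  qed
  define G where "G = (\<lambda>\<xi>. indicator {0..1::real} \<xi> *\<^sub>R g \<xi>)"
  have G: "G \<in> borel_measurable borel" unfolding G_def by (rule g_ok_meas[OF g])
  have gm: "(\<lambda>\<xi>. x \<bullet> gam \<xi>) \<in> borel_measurable borel"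
    unfolding inner_gam by (intro borel_measurable_continuous_onI continuous_intros)
  have "(\<lambda>\<xi>. indicator J \<xi> *\<^sub>R (G \<xi> * e (x \<bullet> gam \<xi>))) \<in> borel_measurable borel"
    apply (rule borel_measurable_scaleR)
     apply (rule borel_measurable_indicator[OF J(2)])
    apply (rule borel_measurable_times[OF G measurable_compose[OF gm e_meas]])
    done
  moreover have "(\<lambda>\<xi>. indicator J \<xi> *\<^sub>R (G \<xi> * e (x \<bullet> gam \<xi>))) = (\<lambda>\<xi>. indicator J \<xi> *\<^sub>R (g \<xi> * e (x \<bullet> gam \<xi>)))"
  proof
    fix \<xi>
    show "indicator J \<xi> *\<^sub>R (G \<xi> * e (x \<bullet> gam \<xi>)) = indicator J \<xi> *\<^sub>R (g \<xi> * e (x \<bullet> gam \<xi>))"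
    proof (cases "\<xi> \<in> J")
      case True
      then have "\<xi> \<in> {0..1}" using J by blast
      then show ?thesis by (simp add: G_def)
    qed simp
  qed
  ultimately show "set_borel_measurable lborel J (\<lambda>\<xi>. g \<xi> * e (x \<bullet> gam \<xi>))"
    unfolding set_borel_measurable_def by simp
  show "AE \<xi> in lborel. \<xi> \<in> J \<longrightarrow> norm (g \<xi> * e (x \<bullet> gam \<xi>)) \<le> norm (g \<xi>)"
    by (simp add: norm_mult)
qed

lemma ext_point: "ext {l..l} g x = 0"
proof -
  have "AE \<xi> in lborel. indicator {l..l} \<xi> *\<^sub>R (g \<xi> * e (x \<bullet> gam \<xi>)) = 0"
    using AE_lborel_singleton[of l] by eventually_elim simp
  then show ?thesis unfolding ext_def set_lebesgue_integral_def by (rule integral_eq_zero_AE)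
qed

lemma ext_add:
  assumes g: "g_ok g" and l: "0 \<le> l" and d: "\<delta> > 0" and n: "l + real n * \<delta> \<le> 1"
  shows "ext {l..l + real n * \<delta>} g x = (\<Sum>k<n. ext {l + real k * \<delta> .. l + (real k + 1) * \<delta>} g x)"
  using n
proof (induction n)
  case 0
  then show ?case using ext_point[of l g x] by simp
next
  case (Suc n)
  have n1: "l + real n * \<delta> \<le> 1" using Suc.prems d by (simp add: algebra_simps)
  define A where "A = {l..l + real n * \<delta>}"
  define B where "B = {l + real n * \<delta> .. l + (real n + 1) * \<delta>}"
  have dn: "0 \<le> \<delta> * real n" using d by simp
  have AB: "{l..l + real (Suc n) * \<delta>} = A \<union> B"
  proof -
    have 1: "l \<le> l + real n * \<delta>" using dn by (simp add: mult.commute)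
    have 2: "l + real n * \<delta> \<le> l + (real n + 1) * \<delta>" using d by (simp add: algebra_simps)
    have 3: "l + real (Suc n) * \<delta> = l + (real n + 1) * \<delta>" by simp
    show ?thesis unfolding A_def B_def 3 by (rule ivl_disj_un_two_touch(4)[OF 1 2, symmetric])
  qed
  have A01: "A \<subseteq> {0..1}" unfolding A_def using l n1 by auto
  have B01: "B \<subseteq> {0..1}" unfolding B_def using l d Suc.prems by (auto simp: algebra_simps intro: order_trans[OF _ mult_nonneg_nonneg])
  have ae: "AE \<xi> in lborel. \<not> (\<xi> \<in> A \<and> \<xi> \<in> B)"
    using AE_lborel_singleton[of "l + real n * \<delta>"] by eventually_elim (auto simp: A_def B_def)
  have "ext {l..l + real (Suc n) * \<delta>} g x = ext A g x + ext B g x"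
    unfolding ext_def AB
    by (rule set_integral_Un_AE[OF ae]) (auto simp: A_def B_def intro!: ext_integrable[OF g] A01[unfolded A_def] B01[unfolded B_def])
  also have "ext A g x = (\<Sum>k<n. ext {l + real k * \<delta> .. l + (real k + 1) * \<delta>} g x)"
    unfolding A_def by (rule Suc.IH[OF n1])
  finally show ?case by (simp add: B_def)
qed

lemma N_zero_of_AE:
  assumes F: "F \<in> borel_measurable borel" and Z: "AE x in lborel. F x = 0" and p: "p > 0"
  shows "(\<integral>\<^sup>+x. ennreal (cmod (F x) ^ p) \<partial>lborel) = 0"
proof -
  have "AE x in lborel. ennreal (cmod (F x) ^ p) = 0" using Z by eventually_elim (simp add: p)
  moreover have "(\<lambda>x. ennreal (cmod (F x) ^ p)) \<in> borel_measurable lborel" using pow_meas[OF F] by simp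
  ultimately show ?thesis by (simp add: nn_integral_0_iff_AE)
qed

lemma AE_of_N12_zero:
  assumes F: "F \<in> borel_measurable borel" and Z: "N12 F = 0"
  shows "AE x in lborel. F x = 0"
proof -
  have "(\<lambda>x. ennreal (cmod (F x) ^ 12)) \<in> borel_measurable lborel" using pow_meas[OF F] by simp
  then have "AE x in lborel. ennreal (cmod (F x) ^ 12) = 0" using Z unfolding N12_def by (simp add: nn_integral_0_iff_AE)
  then show ?thesis by eventually_elim simp
qed

lemma ext_AE_zero:
  assumes g: "g_ok g" and l: "0 \<le> l" and d: "\<delta> > 0" and n: "l + real n * \<delta> \<le> 1"
    and Z: "(\<Sum>k<n. L12 (ext {l + real k * \<delta> .. l + (real k + 1) * \<delta>} g) ^ 4) = 0"
  shows "AE x in lborel. ext {l..l + real n * \<delta>} g x = 0"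
proof -
  have each: "AE x in lborel. ext {l + real k * \<delta> .. l + (real k + 1) * \<delta>} g x = 0" if k: "k \<in> {..<n}" for k
  proof -
    have "L12 (ext {l + real k * \<delta> .. l + (real k + 1) * \<delta>} g) ^ 4 = 0"
      using Z k by (simp add: sum_eq_0_iff)
    then have "N12 (ext {l + real k * \<delta> .. l + (real k + 1) * \<delta>} g) = 0"
      by (simp add: N12_L12)
    moreover have "{l + real k * \<delta> .. l + (real k + 1) * \<delta>} \<subseteq> {0..1}"
    proof -
      have "real k + 1 \<le> real n" using k by simp
      then have "(real k + 1) * \<delta> \<le> real n * \<delta>" using d by (intro mult_right_mono) auto
      moreover have "0 \<le> real k * \<delta>" using d by simp
      ultimately show ?thesis using l n by auto
    qed
    ultimately show ?thesis by (intro AE_of_N12_zero ext_meas[OF g]) auto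
  qed
  have "AE x in lborel. \<forall>k\<in>{..<n}. ext {l + real k * \<delta> .. l + (real k + 1) * \<delta>} g x = 0"
    by (rule AE_finite_allI) (use each in auto)
  then show ?thesis
    by eventually_elim (simp add: ext_add[OF g l d n])
qed

definition lmat :: "real \<Rightarrow> real \<Rightarrow> real^3^3" where
  "lmat l s = vector [vector [s, (2 * l * s), (3 * l^2 * s)], vector [0, (s^2), (3 * l * s^2)], vector [0, 0, (s^3)]]"

lemma lmat_apply: "(lmat l s *v x) = vector [(s * (x$1) + (2 * l * s) * (x$2) + (3 * l^2 * s) * (x$3)), ((s^2) * (x$2) + (3 * l * s^2) * (x$3)), ((s^3) * (x$3))]"
  by (simp add: vec_eq_iff forall_3 lmat_def matrix_vector_mult_def sum_3)

lemma det_lmat: "det (lmat l s) = s^6"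
  by (simp add: lmat_def det_3; algebra)

lemma inner_gam_shift: "x \<bullet> gam (l + s * \<eta>) = x \<bullet> gam l + (lmat l s *v x) \<bullet> gam \<eta>"
  by (simp add: inner_gam lmat_apply; algebra)

lemma ext_rescale:
  assumes s: "s > 0"
  shows "ext {l + s * a .. l + s * b} g x = complex_of_real s * e (x \<bullet> gam l) * ext {a..b} (\<lambda>\<eta>. g (l + s * \<eta>)) (lmat l s *v x)"
proof -
  define f where "f \<xi> = indicator {l + s * a .. l + s * b} \<xi> *\<^sub>R (g \<xi> * e (x \<bullet> gam \<xi>))" for \<xi>
  have "ext {l + s * a .. l + s * b} g x = (\<integral>\<xi>. f \<xi> \<partial>lborel)"
    unfolding ext_def set_lebesgue_integral_def f_def ..
  also have "\<dots> = \<bar>s\<bar> *\<^sub>R (\<integral>\<eta>. f (l + s * \<eta>) \<partial>lborel)"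
    using s by (intro lborel_integral_real_affine) simp
  also have "(\<lambda>\<eta>. f (l + s * \<eta>)) = (\<lambda>\<eta>. e (x \<bullet> gam l) * (indicator {a..b} \<eta> *\<^sub>R (g (l + s * \<eta>) * e ((lmat l s *v x) \<bullet> gam \<eta>))))"
  proof
    fix \<eta>
    have "indicator {l + s * a .. l + s * b} (l + s * \<eta>) = (indicator {a..b} \<eta> :: real)"
      using s by (simp add: indicator_def)
    then show "f (l + s * \<eta>) = e (x \<bullet> gam l) * (indicator {a..b} \<eta> *\<^sub>R (g (l + s * \<eta>) * e ((lmat l s *v x) \<bullet> gam \<eta>)))"
      unfolding f_def inner_gam_shift e_add by (simp add: ac_simps)
  qed
  also have "(\<integral>\<eta>. e (x \<bullet> gam l) * (indicator {a..b} \<eta> *\<^sub>R (g (l + s * \<eta>) * e ((lmat l s *v x) \<bullet> gam \<eta>))) \<partial>lborel)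
     = e (x \<bullet> gam l) * ext {a..b} (\<lambda>\<eta>. g (l + s * \<eta>)) (lmat l s *v x)"
    unfolding ext_def set_lebesgue_integral_def by (rule integral_mult_right_zero)
  finally show ?thesis using s by (simp add: scaleR_conv_of_real ac_simps)
qed

lemma cmod_ext_rescale:
  assumes s: "s > 0"
  shows "cmod (ext {l + s * a .. l + s * b} g x) = s * cmod (ext {a..b} (\<lambda>\<eta>. g (l + s * \<eta>)) (lmat l s *v x))"
  using s by (simp add: ext_rescale norm_mult)

lemma lmat_inv: "s \<noteq> 0 \<Longrightarrow> invertible (lmat l s)"
  by (simp add: invertible_det_nz det_lmat)

lemma g_ok_rescale:
  assumes g: "g_ok g" and l: "0 \<le> l" and s: "s > 0" and ls: "l + s \<le> 1"
  shows "g_ok (\<lambda>\<eta>. g (l + s * \<eta>))"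
proof -
  have "set_integrable lborel {l..l+s} g"
  proof (rule set_integrable_subset)
    show "set_integrable lborel {0..1} g" using g unfolding g_ok_def .
    show "{l..l+s} \<in> sets lborel" by simp
    show "{l..l+s} \<subseteq> {0..1}" using l ls by auto
  qed
  then have "integrable lborel (\<lambda>\<xi>. indicator {l..l+s} \<xi> *\<^sub>R g \<xi>)" unfolding set_integrable_def .
  then have "integrable lborel (\<lambda>\<eta>. indicator {l..l+s} (l + s * \<eta>) *\<^sub>R g (l + s * \<eta>))"
    using s by (intro lborel_integrable_real_affine) auto
  moreover have "(\<lambda>\<eta>. indicator {l..l+s} (l + s * \<eta>) *\<^sub>R g (l + s * \<eta>)) = (\<lambda>\<eta>. indicator {0..1} \<eta> *\<^sub>R g (l + s * \<eta>))"
  proof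
    fix \<eta>
    have "indicator {l..l+s} (l + s * \<eta>) = (indicator {0..1} \<eta> :: real)"
      using s by (simp add: indicator_def mult_le_cancel_left1 zero_le_mult_iff)
    then show "indicator {l..l+s} (l + s * \<eta>) *\<^sub>R g (l + s * \<eta>) = indicator {0..1} \<eta> *\<^sub>R g (l + s * \<eta>)" by simp
  qed
  ultimately show ?thesis unfolding g_ok_def set_integrable_def by simp
qed

lemma N12_rescale:
  assumes s: "s > 0" and g: "g_ok (\<lambda>\<eta>. g (l + s * \<eta>))" and ab: "{a..b} \<subseteq> {0..1}"
  shows "N12 (ext {l + s * a .. l + s * b} g) = ennreal (s^6) * N12 (ext {a..b} (\<lambda>\<eta>. g (l + s * \<eta>)))"
proof -
  define h where "h y = ennreal (cmod (ext {a..b} (\<lambda>\<eta>. g (l + s * \<eta>)) y) ^ 12)" for y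
  have hm: "h \<in> borel_measurable borel" unfolding h_def by (rule pow_meas[OF ext_meas[OF g ab]]) simp
  have hL: "(\<lambda>x. h (lmat l s *v x)) \<in> borel_measurable lborel"
    using measurable_compose[OF mv_meas hm] by simp
  have "N12 (ext {l + s * a .. l + s * b} g) = (\<integral>\<^sup>+x. ennreal (s^12) * h (lmat l s *v x) \<partial>lborel)"
    unfolding N12_def h_def
    by (intro nn_integral_cong) (simp add: cmod_ext_rescale[OF s] ennreal_mult'[symmetric] power_mult_distrib)
  also have "\<dots> = ennreal (s^12) * (\<integral>\<^sup>+x. h (lmat l s *v x) \<partial>lborel)"
    by (rule nn_integral_cmult[OF hL])
  also have "(\<integral>\<^sup>+x. h (lmat l s *v x) \<partial>lborel) = ennreal (1 / \<bar>det (lmat l s)\<bar>) * (\<integral>\<^sup>+x. h x \<partial>lborel)"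
    by (rule nn_integral_linear[OF lmat_inv hm]) (use s in simp)
  also have "(\<integral>\<^sup>+x. h x \<partial>lborel) = N12 (ext {a..b} (\<lambda>\<eta>. g (l + s * \<eta>)))"
    unfolding N12_def h_def ..
  also have "ennreal (s^12) * (ennreal (1 / \<bar>det (lmat l s)\<bar>) * N12 (ext {a..b} (\<lambda>\<eta>. g (l + s * \<eta>))))
      = ennreal (s^12 * (1 / \<bar>det (lmat l s)\<bar>)) * N12 (ext {a..b} (\<lambda>\<eta>. g (l + s * \<eta>)))"
    using s by (simp add: ennreal_mult'[symmetric] mult.assoc[symmetric])
  also have "s^12 * (1 / \<bar>det (lmat l s)\<bar>) = s^6"
    using s by (simp add: det_lmat field_simps power_add[symmetric])
  finally show ?thesis .
qed

lemma L12_rescale: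
  assumes s: "s > 0" and g: "g_ok (\<lambda>\<eta>. g (l + s * \<eta>))" and ab: "{a..b} \<subseteq> {0..1}"
  shows "L12 (ext {l + s * a .. l + s * b} g) = ennreal ((s^6) powr (1/12)) * L12 (ext {a..b} (\<lambda>\<eta>. g (l + s * \<eta>)))"
  unfolding L12_N12 N12_rescale[OF s g ab] using s by (simp add: ep_mult)

lemma dec_apply:
  assumes g: "g_ok g" and l: "0 \<le> l" and s: "s > 0" and ls: "l + s \<le> 1" and d: "\<delta> > 0" and n: "s / \<delta> = real n"
    and D: "\<forall>g. g_ok g \<longrightarrow> L12 (ext {0..1} g) \<le> D * enn_powr (1/4) (\<Sum>J\<in>part (\<delta>/s) 0 1. L12 (ext J g) ^ 4)"
  shows "L12 (ext {l..l+s} g) \<le> D * enn_powr (1/4) (\<Sum>k<n. L12 (ext {l + real k * \<delta> .. l + (real k + 1) * \<delta>} g) ^ 4)"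
proof -
  define gt where "gt = (\<lambda>\<eta>. g (l + s * \<eta>))"
  have gt: "g_ok gt" unfolding gt_def by (rule g_ok_rescale[OF g l s ls])
  define \<sigma> where "\<sigma> = \<delta> / s"
  have sig: "\<sigma> > 0" unfolding \<sigma>_def using d s by simp
  have nsig: "real n * \<sigma> = 1"
  proof -
    have "real n * \<sigma> = (s / \<delta>) * (\<delta> / s)" using n by (simp add: \<sigma>_def)
    also have "\<dots> = 1" using s d by simp
    finally show ?thesis .
  qed
  have N: "nat \<lfloor>(1 - 0) / \<sigma>\<rfloor> = n" unfolding \<sigma>_def using n s d by (simp add: field_simps)
  define lam where "lam = ennreal ((s^6) powr (1/12))"
  define St where "St = (\<Sum>k<n. L12 (ext {0 + real k * \<sigma> .. 0 + (real k + 1) * \<sigma>} gt) ^ 4)"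
  have Dg: "L12 (ext {0..1} gt) \<le> D * enn_powr (1/4) St"
    using D gt unfolding St_def part_sum[OF sig] N \<sigma>_def[symmetric] by blast
  have whole: "L12 (ext {l..l+s} g) = lam * L12 (ext {0..1} gt)"
    using L12_rescale[OF s gt[unfolded gt_def], of 0 1] unfolding lam_def gt_def by simp
  have piece: "L12 (ext {l + real k * \<delta> .. l + (real k + 1) * \<delta>} g) = lam * L12 (ext {0 + real k * \<sigma> .. 0 + (real k + 1) * \<sigma>} gt)"
    if k: "k < n" for k
  proof -
    have sub: "{0 + real k * \<sigma> .. 0 + (real k + 1) * \<sigma>} \<subseteq> {0..1}"
    proof -
      have "real k + 1 \<le> real n" using k by simp
      then have "(real k + 1) * \<sigma> \<le> real n * \<sigma>" using sig by (intro mult_right_mono) auto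
      then have "(real k + 1) * \<sigma> \<le> 1" using nsig by simp
      moreover have "0 \<le> real k * \<sigma>" using sig by simp
      ultimately show ?thesis by auto
    qed
    have e1: "l + s * (0 + real k * \<sigma>) = l + real k * \<delta>" unfolding \<sigma>_def using s by (simp add: field_simps)
    have e2: "l + s * (0 + (real k + 1) * \<sigma>) = l + (real k + 1) * \<delta>" unfolding \<sigma>_def using s by (simp add: field_simps)
    show ?thesis
      using L12_rescale[OF s gt[unfolded gt_def] sub] unfolding e1 e2 lam_def gt_def by simp
  qed
  have S: "(\<Sum>k<n. L12 (ext {l + real k * \<delta> .. l + (real k + 1) * \<delta>} g) ^ 4) = lam^4 * St"
    unfolding St_def sum_distrib_left by (intro sum.cong refl) (simp add: piece power_mult_distrib)
  have l4: "enn_powr (1/4) (lam^4) = lam"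
    using ep_nat[of 4 lam] ep_ep[of "1/4" 4 lam] by simp
  have "L12 (ext {l..l+s} g) \<le> lam * (D * enn_powr (1/4) St)"
    unfolding whole by (rule mult_left_mono[OF Dg]) simp
  also have "\<dots> = D * enn_powr (1/4) (lam^4 * St)"
    by (simp add: ep_mult l4 ac_simps)
  finally show ?thesis unfolding S .
qed

lemma dec_bound:
  assumes g: "g_ok g" and l: "0 \<le> l" and s: "s > 0" and ls: "l + s \<le> 1" and d: "\<delta> > 0" and n: "s / \<delta> = real n"
    and S0: "0 < (\<Sum>k<n. L12 (ext {l + real k * \<delta> .. l + (real k + 1) * \<delta>} g) ^ 4)"
    and S1: "(\<Sum>k<n. L12 (ext {l + real k * \<delta> .. l + (real k + 1) * \<delta>} g) ^ 4) < top"
  shows "N12 (ext {l..l+s} g) \<le> Dec (\<delta>/s) ^ 12 * enn_powr 3 (\<Sum>k<n. L12 (ext {l + real k * \<delta> .. l + (real k + 1) * \<delta>} g) ^ 4)"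
proof -
  define S where "S = (\<Sum>k<n. L12 (ext {l + real k * \<delta> .. l + (real k + 1) * \<delta>} g) ^ 4)"
  define SD where "SD = {D. \<forall>g. g_ok g \<longrightarrow> L12 (ext {0..1} g) \<le> D * enn_powr (1/4) (\<Sum>J\<in>part (\<delta>/s) 0 1. L12 (ext J g) ^ 4)}"
  have Sn0: "S \<noteq> 0" by (rule not_sym[OF order.strict_implies_not_eq[OF S0[folded S_def]]])
  have Snt: "S \<noteq> top" by (rule order.strict_implies_not_eq[OF S1[folded S_def]])
  have Y0: "0 < enn_powr (1/4) S" using Sn0 by (intro gr_zeroI) simp
  have Y1: "enn_powr (1/4) S < top" using Snt by (simp add: less_top[symmetric])
  have "L12 (ext {l..l+s} g) \<le> (Inf SD) ^ 1 * enn_powr (1/4) S"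
  proof (rule Inf_pow_bound[OF _ Y0 Y1])
    fix M assume "M \<in> SD"
    then have "\<forall>g. g_ok g \<longrightarrow> L12 (ext {0..1} g) \<le> M * enn_powr (1/4) (\<Sum>J\<in>part (\<delta>/s) 0 1. L12 (ext J g) ^ 4)"
      unfolding SD_def by simp
    then show "L12 (ext {l..l+s} g) \<le> M ^ 1 * enn_powr (1/4) S"
      unfolding S_def using dec_apply[OF g l s ls d n] by simp
  qed simp
  then have L: "L12 (ext {l..l+s} g) \<le> Dec (\<delta>/s) * enn_powr (1/4) S"
    unfolding SD_def Dec_def by simp
  have "N12 (ext {l..l+s} g) = L12 (ext {l..l+s} g) ^ 12" by (rule N12_L12)
  also have "\<dots> \<le> (Dec (\<delta>/s) * enn_powr (1/4) S) ^ 12" by (rule power_mono[OF L]) simp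
  also have "\<dots> = Dec (\<delta>/s) ^ 12 * enn_powr 3 S"
    by (simp add: power_mult_distrib ep_pow)
  finally show ?thesis unfolding S_def .
qed

lemma final_algebra:
  fixes m d S S' :: ennreal and K :: real
  assumes K: "K \<ge> 0"
  shows "enn_powr (3/4) (ennreal K) * (enn_powr (1/4) (m^12 * S' * S^2) * enn_powr (3/4) (d^12 * enn_powr 3 S' * ennreal K))
    = (ennreal (K powr (1/8)) * enn_powr (1/4) m * enn_powr (3/4) d)^12 * enn_powr (1/2) S * enn_powr (5/2) S'"
proof -
  have m: "enn_powr (1/4) (m^12) = enn_powr 3 m"
    using ep_nat[of 12 m] ep_ep[of "1/4" 12 m] by simp
  have s2: "enn_powr (1/4) (S^2) = enn_powr (1/2) S"
    using ep_nat[of 2 S] ep_ep[of "1/4" 2 S] by simp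
  have dd: "enn_powr (3/4) (d^12) = enn_powr 9 d"
    using ep_nat[of 12 d] ep_ep[of "3/4" 12 d] by simp
  have s3: "enn_powr (3/4) (enn_powr 3 S') = enn_powr (9/4) S'"
    using ep_ep[of "3/4" 3 S'] by simp
  have L: "enn_powr (1/4) (m^12 * S' * S^2) = enn_powr 3 m * enn_powr (1/4) S' * enn_powr (1/2) S"
    by (simp add: ep_mult m s2)
  have R: "enn_powr (3/4) (d^12 * enn_powr 3 S' * ennreal K) = enn_powr 9 d * enn_powr (9/4) S' * enn_powr (3/4) (ennreal K)"
    by (simp add: ep_mult dd s3 del: ep_ennreal)
  have c: "ennreal (K powr (1/8)) ^ 12 = enn_powr (3/4) (ennreal K) * enn_powr (3/4) (ennreal K)"
  proof -
    have "ennreal (K powr (1/8)) ^ 12 = enn_powr 12 (enn_powr (1/8) (ennreal K))"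
      using K ep_nat[of 12 "enn_powr (1/8) (ennreal K)"] by simp
    also have "\<dots> = enn_powr (3/2) (ennreal K)" by (simp add: ep_ep)
    also have "\<dots> = enn_powr (3/4) (ennreal K) * enn_powr (3/4) (ennreal K)"
      using ep_add[of "3/4" "3/4" "ennreal K"] by simp
    finally show ?thesis .
  qed
  have mm: "enn_powr (1/4) m ^ 12 = enn_powr 3 m" using ep_pow[of "1/4" 12 m] by simp
  have d9: "enn_powr (3/4) d ^ 12 = enn_powr 9 d" using ep_pow[of "3/4" 12 d] by simp
  have ss: "enn_powr (1/4) S' * enn_powr (9/4) S' = enn_powr (5/2) S'"
    using ep_add[of "1/4" "9/4" S'] by simp
  have "(ennreal (K powr (1/8)) * enn_powr (1/4) m * enn_powr (3/4) d)^12 * enn_powr (1/2) S * enn_powr (5/2) S'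
      = (enn_powr (3/4) (ennreal K) * enn_powr (3/4) (ennreal K)) * enn_powr 3 m * enn_powr 9 d * enn_powr (1/2) S * (enn_powr (1/4) S' * enn_powr (9/4) S')"
    unfolding power_mult_distrib c mm d9 ss ..
  also have "\<dots> = enn_powr (3/4) (ennreal K) * ((enn_powr 3 m * enn_powr (1/4) S' * enn_powr (1/2) S) * (enn_powr 9 d * enn_powr (9/4) S' * enn_powr (3/4) (ennreal K)))"
    by (simp only: ac_simps)
  finally show ?thesis unfolding L R by simp
qed

lemma Ninv_pos: "x \<in> Ninv \<Longrightarrow> 0 < x \<and> x \<le> 1"
  unfolding Ninv_def by auto

lemma part_elem:
  assumes s: "s > 0" and I: "I \<in> part s 0 1"
  shows "\<exists>l. I = {l..l+s} \<and> 0 \<le> l \<and> l + s \<le> 1"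
proof -
  obtain k where k: "k < nat \<lfloor>(1 - 0) / s\<rfloor>" and Ik: "I = {0 + real k * s .. 0 + (real k + 1) * s}"
    using I unfolding part_def by blast
  have "k < nat \<lfloor>1 / s\<rfloor>" using k by simp
  then have "int k < \<lfloor>1 / s\<rfloor>" by (simp add: zless_nat_eq_int_zless)
  then have "int (k + 1) \<le> \<lfloor>1 / s\<rfloor>" by simp
  then have "real (k + 1) \<le> 1 / s" by (simp add: le_floor_iff)
  then have "real (k + 1) * s \<le> 1" using s by (simp add: field_simps)
  then show ?thesis using Ik s by (intro exI[of _ "real k * s"]) (auto simp: algebra_simps)
qed

lemma ivl_facts:
  assumes s: "s > 0" and d: "\<delta> > 0" and n: "s / \<delta> = real n" and l: "0 \<le> l" "l + s \<le> 1"
  shows "Inf {l..l+s} = l" "Sup {l..l+s} = l + s"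
    "(\<Sum>J\<in>part \<delta> (Inf {l..l+s}) (Sup {l..l+s}). F J) = (\<Sum>k<n. F {l + real k * \<delta> .. l + (real k + 1) * \<delta>})"
    "l + real n * \<delta> = l + s"
    "invertible (TA {l..l+s})"
    "{l..l+s} \<subseteq> {0..1}" "{l..l+s} \<in> sets borel"
proof -
  have ls: "l \<le> l + s" using s by simp
  show i: "Inf {l..l+s} = l" using ls by simp
  show su: "Sup {l..l+s} = l + s" using ls by simp
  have "nat \<lfloor>(l + s - l) / \<delta>\<rfloor> = n" using n by simp
  then show "(\<Sum>J\<in>part \<delta> (Inf {l..l+s}) (Sup {l..l+s}). F J) = (\<Sum>k<n. F {l + real k * \<delta> .. l + (real k + 1) * \<delta>})"
    unfolding i su part_sum[OF d] by simp
  show "l + real n * \<delta> = l + s" using n d by (simp add: field_simps)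
  show "invertible (TA {l..l+s})" using s by (intro TA_inv) (simp add: i su)
  show "{l..l+s} \<subseteq> {0..1}" using l by auto
  show "{l..l+s} \<in> sets borel" by simp
qed

lemma zero_conv:
  assumes g: "g_ok g" and s: "s > 0" and d: "\<delta> > 0" and n: "s / \<delta> = real n" and l: "0 \<le> l" "l + s \<le> 1"
    and Z: "(\<Sum>J\<in>part \<delta> (Inf {l..l+s}) (Sup {l..l+s}). L12 (ext J g) ^ 4) = 0" and p: "p > 0"
  shows "convI (ext {l..l+s} g) p I' E' x = 0"
proof -
  note f = ivl_facts[OF s d n l]
  have Z': "(\<Sum>k<n. L12 (ext {l + real k * \<delta> .. l + (real k + 1) * \<delta>} g) ^ 4) = 0"
    using Z unfolding f(3) .
  have "AE x in lborel. ext {l..l + real n * \<delta>} g x = 0"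
    by (rule ext_AE_zero[OF g l(1) d _ Z']) (use f(4) l(2) in simp)
  then have AE: "AE x in lborel. ext {l..l+s} g x = 0" unfolding f(4) .
  have m: "ext {l..l+s} g \<in> borel_measurable borel" by (rule ext_meas[OF g f(6) f(7)])
  show ?thesis by (rule conv_zero[OF m N_zero_of_AE[OF m AE p]])
qed

lemma top_prod:
  fixes y S S' :: ennreal
  assumes "y \<noteq> 0" "S \<noteq> 0" "S' \<noteq> 0" "S = top \<or> S' = top"
  shows "y ^ 12 * enn_powr (1/2) S * enn_powr (5/2) S' = top"
proof -
  have "y ^ 12 \<noteq> 0" using assms(1) by simp
  moreover have "enn_powr (1/2) S \<noteq> 0" "enn_powr (5/2) S' \<noteq> 0" using assms(2,3) by simp_all
  moreover have "enn_powr (1/2) S = top \<or> enn_powr (5/2) S' = top" using assms(4) by auto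
  ultimately show ?thesis by (auto simp: ennreal_mult_top ennreal_top_mult)
qed

lemma main_ineq:
  assumes E: "E > 1000" and K: "KE E = ennreal K" "0 \<le> K"
    and a: "a > 0" and b: "b > 0" and \<delta>N: "\<delta> \<in> Ninv" and \<nu>N: "\<nu> \<in> Ninv"
    and na: "\<nu> ^ a / \<delta> \<in> \<nat>" and nb: "\<nu> ^ b / \<delta> \<in> \<nat>"
  shows "M1 a b \<delta> \<nu> E \<le> ennreal (K powr (1/8)) * enn_powr (1/4) (M2 b a \<delta> \<nu> (E / 1)) * enn_powr (3/4) (Dec (\<delta> / \<nu> ^ b))"
proof -
  have d0: "\<delta> > 0" using Ninv_pos[OF \<delta>N] by simp
  have \<nu>0: "\<nu> > 0" using Ninv_pos[OF \<nu>N] by simp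
  have sa: "\<nu> ^ a > 0" and sb: "\<nu> ^ b > 0" using \<nu>0 by simp_all
  obtain nA where nA: "\<nu> ^ a / \<delta> = real nA" using na by (auto elim: Nats_cases)
  obtain nB where nB: "\<nu> ^ b / \<delta> = real nB" using nb by (auto elim: Nats_cases)
  define m2 where "m2 = M2 b a \<delta> \<nu> (E / 1)"
  define d where "d = Dec (\<delta> / \<nu> ^ b)"
  define R where "R = ennreal (K powr (1/8)) * enn_powr (1/4) m2 * enn_powr (3/4) d"
  define S1 where "S1 = {M. \<forall>g. g_ok g \<longrightarrow>
      (\<forall>I\<in>part (\<nu>^a) 0 1. \<forall>I'\<in>part (\<nu>^b) 0 1. setdist I I' \<ge> \<nu> \<longrightarrow>
        (\<integral>\<^sup>+ x. convI (ext I g) 2 I E x * convI (ext I' g) 10 I' E x \<partial>lborel)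
        \<le> M ^ 12 * enn_powr (1/2) (\<Sum>J\<in>part \<delta> (Inf I) (Sup I). L12 (ext J g) ^ 4)
                 * enn_powr (5/2) (\<Sum>J'\<in>part \<delta> (Inf I') (Sup I'). L12 (ext J' g) ^ 4))}"
  define S2 where "S2 = {M. \<forall>g. g_ok g \<longrightarrow>
      (\<forall>I\<in>part (\<nu>^b) 0 1. \<forall>I'\<in>part (\<nu>^a) 0 1. setdist I I' \<ge> \<nu> \<longrightarrow>
        (\<integral>\<^sup>+ x. convI (ext I g) 4 I (E/1) x * convI (ext I' g) 8 I' (E/1) x \<partial>lborel)
        \<le> M ^ 12 * (\<Sum>J\<in>part \<delta> (Inf I) (Sup I). L12 (ext J g) ^ 4)
                 * (\<Sum>J'\<in>part \<delta> (Inf I') (Sup I'). L12 (ext J' g) ^ 4) ^ 2)}"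
  have M1eq: "M1 a b \<delta> \<nu> E = Inf S1" unfolding M1_def S1_def ..
  have m2eq: "m2 = Inf S2" unfolding m2_def M2_def S2_def ..
  have mem: "y \<in> S1" if yR: "R < y" for y
    unfolding S1_def
  proof (intro CollectI allI impI ballI)
    fix g I I' assume g: "g_ok g" and I: "I \<in> part (\<nu>^a) 0 1" and I': "I' \<in> part (\<nu>^b) 0 1"
      and sd: "setdist I I' \<ge> \<nu>"
    obtain lI where lI: "I = {lI..lI + \<nu>^a}" "0 \<le> lI" "lI + \<nu>^a \<le> 1" using part_elem[OF sa I] by blast
    obtain lJ where lJ: "I' = {lJ..lJ + \<nu>^b}" "0 \<le> lJ" "lJ + \<nu>^b \<le> 1" using part_elem[OF sb I'] by blast
    note fI = ivl_facts[OF sa d0 nA lI(2,3)]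
    note fJ = ivl_facts[OF sb d0 nB lJ(2,3)]
    define SI where "SI = (\<Sum>J\<in>part \<delta> (Inf I) (Sup I). L12 (ext J g) ^ 4)"
    define SJ where "SJ = (\<Sum>J'\<in>part \<delta> (Inf I') (Sup I'). L12 (ext J' g) ^ 4)"
    define LHS where "LHS = (\<integral>\<^sup>+ x. convI (ext I g) 2 I E x * convI (ext I' g) 10 I' E x \<partial>lborel)"
    have Am: "ext I g \<in> borel_measurable borel" unfolding lI(1) by (rule ext_meas[OF g fI(6) fI(7)])
    have Bm: "ext I' g \<in> borel_measurable borel" unfolding lJ(1) by (rule ext_meas[OF g fJ(6) fJ(7)])
    have y0: "y \<noteq> 0" using yR by auto
    show "LHS \<le> y ^ 12 * enn_powr (1/2) SI * enn_powr (5/2) SJ"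
    proof (cases "SI = 0 \<or> SJ = 0")
      case True
      have "(\<lambda>x. convI (ext I g) 2 I E x * convI (ext I' g) 10 I' E x) = (\<lambda>x. 0)"
      proof (rule ext)
        fix x
        from True show "convI (ext I g) 2 I E x * convI (ext I' g) 10 I' E x = 0"
        proof
          assume "SI = 0"
          then have "convI (ext I g) 2 I E x = 0"
            unfolding SI_def lI(1) by (rule zero_conv[OF g sa d0 nA lI(2,3)]) simp
          then show ?thesis by simp
        next
          assume "SJ = 0"
          then have "convI (ext I' g) 10 I' E x = 0"
            unfolding SJ_def lJ(1) by (rule zero_conv[OF g sb d0 nB lJ(2,3)]) simp
          then show ?thesis by simp
        qed
      qed
      then show ?thesis unfolding LHS_def by simp
    next
      case False
      then have SI0: "SI \<noteq> 0" and SJ0: "SJ \<noteq> 0" by auto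
      show ?thesis
      proof (cases "SI = top \<or> SJ = top")
        case True
        have "y ^ 12 * enn_powr (1/2) SI * enn_powr (5/2) SJ = top"
          by (rule top_prod[OF y0 SI0 SJ0 True])
        then show ?thesis by simp
      next
        case False
        then have SIt: "SI < top" and SJt: "SJ < top" by (auto simp: less_top)
        have SIp: "0 < SI" and SJp: "0 < SJ" using SI0 SJ0 by (auto intro: gr_zeroI)
        have mb: "LHS \<le> enn_powr (3/4) (KE E) * (enn_powr (1/4) (\<integral>\<^sup>+x. convI (ext I' g) 4 I' E x * convI (ext I g) 8 I E x \<partial>lborel)
            * enn_powr (3/4) (N12 (ext I' g) * KE E))"
          unfolding LHS_def N12_def
          by (rule main_bound[OF Am Bm]) (simp_all add: lI(1) lJ(1) fI(5) fJ(5))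
        have l2: "(\<integral>\<^sup>+x. convI (ext I' g) 4 I' E x * convI (ext I g) 8 I E x \<partial>lborel) \<le> m2 ^ 12 * (SJ * SI ^ 2)"
          unfolding m2eq
        proof (rule Inf_pow_bound)
          show "0 < SJ * SI ^ 2" using SI0 SJ0 by (intro gr_zeroI) simp
          show "SJ * SI ^ 2 < top" using SIt SJt by (simp add: ennreal_mult_less_top power_less_top_ennreal)
          fix M assume "M \<in> S2"
          then have "(\<integral>\<^sup>+ x. convI (ext I' g) 4 I' (E/1) x * convI (ext I g) 8 I (E/1) x \<partial>lborel)
              \<le> M ^ 12 * SJ * SI ^ 2"
            unfolding S2_def SI_def SJ_def using g I I' sd by (auto simp: setdist_sym)
          then show "(\<integral>\<^sup>+x. convI (ext I' g) 4 I' E x * convI (ext I g) 8 I E x \<partial>lborel) \<le> M ^ 12 * (SJ * SI ^ 2)"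
            by (simp add: mult.assoc)
        qed simp
        have T: "N12 (ext I' g) \<le> d ^ 12 * enn_powr 3 SJ"
        proof -
          have SJk: "SJ = (\<Sum>k<nB. L12 (ext {lJ + real k * \<delta> .. lJ + (real k + 1) * \<delta>} g) ^ 4)"
            unfolding SJ_def lJ(1) fJ(3) ..
          show ?thesis unfolding lJ(1) d_def SJk
            by (rule dec_bound[OF g lJ(2) sb lJ(3) d0 nB]) (use SJp SJt SJk in simp_all)
        qed
        have "LHS \<le> enn_powr (3/4) (ennreal K) * (enn_powr (1/4) (m2 ^ 12 * SJ * SI ^ 2) * enn_powr (3/4) (d ^ 12 * enn_powr 3 SJ * ennreal K))"
        proof (rule order.trans[OF mb])
          show "enn_powr (3/4) (KE E) * (enn_powr (1/4) (\<integral>\<^sup>+x. convI (ext I' g) 4 I' E x * convI (ext I g) 8 I E x \<partial>lborel)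
            * enn_powr (3/4) (N12 (ext I' g) * KE E))
            \<le> enn_powr (3/4) (ennreal K) * (enn_powr (1/4) (m2 ^ 12 * SJ * SI ^ 2) * enn_powr (3/4) (d ^ 12 * enn_powr 3 SJ * ennreal K))"
            unfolding K(1)
          proof (rule mult_left_mono[OF mult_mono])
            show "enn_powr (1/4) (\<integral>\<^sup>+x. convI (ext I' g) 4 I' E x * convI (ext I g) 8 I E x \<partial>lborel) \<le> enn_powr (1/4) (m2 ^ 12 * SJ * SI ^ 2)"
              using l2 by (intro ep_mono) (simp_all add: mult.assoc)
            show "enn_powr (3/4) (N12 (ext I' g) * ennreal K) \<le> enn_powr (3/4) (d ^ 12 * enn_powr 3 SJ * ennreal K)"
              using T by (intro ep_mono mult_right_mono) simp_all
          qed simp_all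
        qed
        also have "\<dots> = R ^ 12 * enn_powr (1/2) SI * enn_powr (5/2) SJ"
          unfolding R_def by (rule final_algebra[OF K(2)])
        also have "\<dots> \<le> y ^ 12 * enn_powr (1/2) SI * enn_powr (5/2) SJ"
          using yR by (intro mult_right_mono power_mono) simp_all
        finally show ?thesis .
      qed
    qed
  qed
  have "Inf S1 \<le> R"
    unfolding Inf_le_iff
  proof (intro allI impI)
    fix y assume "R < y"
    then obtain z where "R < z" "z < y" using dense by blast
    then show "\<exists>a\<in>S1. a < y" using mem by blast
  qed
  then show ?thesis unfolding M1eq R_def m2_def d_def .
qed

theorem lemma2p5:
  shows "\<exists>C0::real. C0 > 0 \<and>
    (\<forall>E::real. E > 1000 \<longrightarrow> (\<exists>CE::real. \<forall>(a::nat) (b::nat) (\<delta>::real) (\<nu>::real).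
       a > 0 \<longrightarrow> b > 0 \<longrightarrow> \<delta> \<in> Ninv \<longrightarrow> \<nu> \<in> Ninv \<longrightarrow>
       \<nu> ^ a / \<delta> \<in> \<nat> \<longrightarrow> \<nu> ^ b / \<delta> \<in> \<nat> \<longrightarrow>
       M1 a b \<delta> \<nu> E \<le> ennreal CE * enn_powr (1/4) (M2 b a \<delta> \<nu> (E / C0))
                            * enn_powr (3/4) (Dec (\<delta> / \<nu> ^ b))))"
proof (rule exI[of _ "1::real"], intro conjI allI impI)
  show "(1::real) > 0" by simp
  fix E :: real assume E: "E > 1000"
  have "KE E < top" unfolding KE_def by (rule KE_finite) (use E in simp)
  then obtain K where K: "KE E = ennreal K" "0 \<le> K" by (cases "KE E" rule: ennreal_cases) auto
  show "\<exists>CE::real. \<forall>(a::nat) (b::nat) (\<delta>::real) (\<nu>::real).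
       a > 0 \<longrightarrow> b > 0 \<longrightarrow> \<delta> \<in> Ninv \<longrightarrow> \<nu> \<in> Ninv \<longrightarrow>
       \<nu> ^ a / \<delta> \<in> \<nat> \<longrightarrow> \<nu> ^ b / \<delta> \<in> \<nat> \<longrightarrow>
       M1 a b \<delta> \<nu> E \<le> ennreal CE * enn_powr (1/4) (M2 b a \<delta> \<nu> (E / 1))
                            * enn_powr (3/4) (Dec (\<delta> / \<nu> ^ b))"
    using main_ineq[OF E K] by blast
qed

end
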